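(* Let $p\in(2,3)$ and let $\beta=(\beta^1,\beta^2)$ be either the Itô or the Stratonovich enhanced Brownian motion over $d$-dimensional Brownian motion. Fix $i,j\in\{1,\dots,d\}$ and set $Z_{s,t}=\beta^{2,ij}_{s,t}/|t-s|^{2/p}$ for $0\le s<t\le1$ and $Z_{s,t}=0$ otherwise. Then there is a constant $c=c(p)$ such that for all $s,t,s',t'\in[0,1]$, $$E\big[|Z_{s,t}-Z_{s',t'}|^2\big]\le c\,\big[|s'-s|+|t'-t|\big]^{2(1-2/p)}.$$
   Context: Let $\omega$ be a $d$-dimensional Brownian motion on $[0,1]$ on Wiener space $(C([0,1],\mathbb{R}^d),\mu)$, with expectation $E$. Enhanced Brownian motion: $\beta^1_{s,t}=\omega_t-\omega_s$ and $\beta^{2,ij}_{s,t}=\int_s^t(\omega^i_r-\omega^i_s)\circ d\omega^j_r$ (Stratonovich) or $\int_s^t(\omega^i_r-\omega^i_s)\,d\omega^j_r$ (Itô), for $0\le s\le t\le 1$, taken in a version continuous in $(s,t)$. *)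

theory Defs
  imports "HOL-Probability.Probability"
begin

definition brownian_motion ::
  "'a measure \<Rightarrow> nat \<Rightarrow> (nat \<Rightarrow> real \<Rightarrow> 'a \<Rightarrow> real) \<Rightarrow> bool" where
  "brownian_motion M d W \<longleftrightarrow>
     prob_space M \<and>
     (\<forall>i\<in>{1..d}. \<forall>t\<in>{0..1}. W i t \<in> borel_measurable M) \<and>
     (\<forall>i\<in>{1..d}. \<forall>\<omega>\<in>space M. W i 0 \<omega> = 0) \<and>
     (\<forall>i\<in>{1..d}. \<forall>\<omega>\<in>space M. continuous_on {0..1} (\<lambda>t. W i t \<omega>)) \<and>
     (\<forall>(n::nat) (ts::nat \<Rightarrow> real).
        (\<forall>k<n. ts k < ts (Suc k)) \<and> 0 \<le> ts 0 \<and> ts n \<le> 1 \<longrightarrow>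
        prob_space.indep_vars M (\<lambda>_. borel)
          (\<lambda>(i, k) \<omega>. W i (ts (Suc k)) \<omega> - W i (ts k) \<omega>) ({1..d} \<times> {..<n}) \<and>
        (\<forall>i\<in>{1..d}. \<forall>k<n.
           distributed M lborel (\<lambda>\<omega>. W i (ts (Suc k)) \<omega> - W i (ts k) \<omega>)
             (\<lambda>x. ennreal (normal_density 0 (sqrt (ts (Suc k) - ts k)) x))))"

definition dyad :: "real \<Rightarrow> real \<Rightarrow> nat \<Rightarrow> nat \<Rightarrow> real" where
  "dyad s t n k = s + real k * (t - s) / 2 ^ n"

definition lvl2_sum ::
  "bool \<Rightarrow> (nat \<Rightarrow> real \<Rightarrow> 'a \<Rightarrow> real) \<Rightarrow> nat \<Rightarrow> nat \<Rightarrow> real \<Rightarrow> real \<Rightarrow> nat \<Rightarrow> 'a \<Rightarrow> real" where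
  "lvl2_sum strat W i j s t n \<omega> =
     (\<Sum>k<2^n.
        ((if strat then (W i (dyad s t n k) \<omega> + W i (dyad s t n (Suc k)) \<omega>) / 2
          else W i (dyad s t n k) \<omega>) - W i s \<omega>)
        * (W j (dyad s t n (Suc k)) \<omega> - W j (dyad s t n k) \<omega>))"

text \<open>Second level of enhanced Brownian motion (strat = True: Stratonovich,
  strat = False: Ito), defined as the (almost sure) limit of the dyadic Riemann sums.\<close>
definition beta2 ::
  "bool \<Rightarrow> (nat \<Rightarrow> real \<Rightarrow> 'a \<Rightarrow> real) \<Rightarrow> nat \<Rightarrow> nat \<Rightarrow> real \<Rightarrow> real \<Rightarrow> 'a \<Rightarrow> real" where
  "beta2 strat W i j s t \<omega> = lim (\<lambda>n. lvl2_sum strat W i j s t n \<omega>)"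

definition Zproc ::
  "real \<Rightarrow> bool \<Rightarrow> (nat \<Rightarrow> real \<Rightarrow> 'a \<Rightarrow> real) \<Rightarrow> nat \<Rightarrow> nat \<Rightarrow> real \<Rightarrow> real \<Rightarrow> 'a \<Rightarrow> real" where
  "Zproc p strat W i j s t \<omega> =
     (if 0 \<le> s \<and> s < t \<and> t \<le> 1 then beta2 strat W i j s t \<omega> / (t - s) powr (2 / p) else 0)"

end

theory Submission
  imports Defs
begin

lemma normal_mom:
  fixes v :: real and k :: nat
  assumes v: "0 < v" and D: "distributed M lborel X (\<lambda>y. ennreal (normal_density 0 (sqrt v) y))"
  shows "integrable M (\<lambda>\<omega>. X \<omega> ^ k)"
    and "k \<le> 4 \<Longrightarrow> (\<integral>\<omega>. X \<omega> ^ k \<partial>M) =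
      (if k = 0 then 1 else if k = 2 then v else if k = 4 then 3 * v\<^sup>2 else 0)"
proof -
  have sv: "0 < sqrt v" using v by simp
  have int: "integrable lborel (\<lambda>y. normal_density 0 (sqrt v) y * y ^ k)"
    using integrable_normal_moment[of "sqrt v" 0 k] sv by simp
  show "integrable M (\<lambda>\<omega>. X \<omega> ^ k)"
    using distributed_integrable[OF D, of "\<lambda>y. y ^ k"] int by simp
  have E: "(\<integral>\<omega>. X \<omega> ^ k \<partial>M) = (\<integral>y. normal_density 0 (sqrt v) y * y ^ k \<partial>lborel)"
    using distributed_integral[OF D, of "\<lambda>y. y ^ k"] by simp
  assume k4: "k \<le> 4"
  have "k = 0 \<or> k = 1 \<or> k = 2 \<or> k = 3 \<or> k = 4" using k4 by auto
  then show "(\<integral>\<omega>. X \<omega> ^ k \<partial>M) =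
      (if k = 0 then 1 else if k = 2 then v else if k = 4 then 3 * v\<^sup>2 else 0)"
  proof (elim disjE)
    assume "k = 0" then show ?thesis using E integral_normal_density[OF sv, of 0] by simp
  next
    assume k: "k = 1"
    show ?thesis using E integral_normal_moment_odd[OF sv, of 0 0] k by simp
  next
    assume k: "k = 3"
    show ?thesis using E integral_normal_moment_odd[OF sv, of 0 1] k by (simp add: numeral_eq_Suc)
  next
    assume k: "k = 2"
    show ?thesis using E integral_normal_moment_even[OF sv, of 0 1] k v
      by (simp add: fact_numeral)
  next
    assume k: "k = 4"
    have "(\<integral>y. normal_density 0 (sqrt v) y * y ^ (2*2) \<partial>lborel) = fact (2 * 2) / ((2 / (sqrt v)\<^sup>2)^2 * fact 2)"
      using integral_normal_moment_even[OF sv, of 0 2] by simp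
    then show ?thesis using E k v
      by (simp add: fact_numeral power2_eq_square field_simps)
  qed
qed

definition mm :: "real \<Rightarrow> nat \<Rightarrow> real" where
  "mm v k = (if k = 0 then 1 else if k = 2 then v else if k = 4 then 3 * v\<^sup>2 else 0)"

definition wk :: "('i \<Rightarrow> real) \<Rightarrow> 'i \<Rightarrow> 'i \<Rightarrow> 'i \<Rightarrow> 'i \<Rightarrow> real" where
  "wk v a b c e = (if a = b \<and> c = e then v a * v c else 0) + (if a = c \<and> b = e then v a * v b else 0)
     + (if a = e \<and> b = c then v a * v b else 0)"

definition cnt4 :: "'i \<Rightarrow> 'i \<Rightarrow> 'i \<Rightarrow> 'i \<Rightarrow> 'i \<Rightarrow> nat" where
  "cnt4 a b c e x = (if x = a then 1 else 0) + (if x = b then 1 else 0) + (if x = c then 1 else 0)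
     + (if x = e then 1 else 0)"

lemma prod_pow_single:
  fixes f :: "'i \<Rightarrow> real"
  assumes "finite J" "a \<in> J"
  shows "(\<Prod>x\<in>J. f x ^ (if x = a then 1 else 0)) = f a"
proof -
  have "(\<Prod>x\<in>J. f x ^ (if x = a then 1 else 0)) = (\<Prod>x\<in>J. if x = a then f x else 1)"
    by (intro prod.cong) auto
  also have "\<dots> = f a" using assms by (simp add: prod.delta)
  finally show ?thesis .
qed

lemma prod_cnt4:
  fixes f :: "'i \<Rightarrow> real"
  assumes "finite J" "a \<in> J" "b \<in> J" "c \<in> J" "e \<in> J"
  shows "(\<Prod>x\<in>J. f x ^ cnt4 a b c e x) = f a * f b * f c * f e"
  unfolding cnt4_def power_add prod.distrib
  using prod_pow_single[OF assms(1)] assms by simp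

lemma mm_wk:
  "(\<Prod>x\<in>{a,b,c,e}. mm (v x) (cnt4 a b c e x)) = wk v a b c e"
  unfolding wk_def
  by (cases "a = b"; cases "a = c"; cases "a = e"; cases "b = c"; cases "b = e"; cases "c = e")
     (simp_all add: cnt4_def mm_def power2_eq_square insert_commute)

lemma (in prob_space) wick4:
  assumes fin: "finite I" and ind: "indep_vars (\<lambda>_. borel) X I"
    and D: "\<And>x. x \<in> I \<Longrightarrow> distributed M lborel (X x) (\<lambda>y. ennreal (normal_density 0 (sqrt (v x)) y))"
    and vpos: "\<And>x. x \<in> I \<Longrightarrow> 0 < v x"
    and abce: "a \<in> I" "b \<in> I" "c \<in> I" "e \<in> I"
  shows "integrable M (\<lambda>\<omega>. X a \<omega> * X b \<omega> * X c \<omega> * X e \<omega>)"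
    and "(\<integral>\<omega>. X a \<omega> * X b \<omega> * X c \<omega> * X e \<omega> \<partial>M) = wk v a b c e"
proof -
  define J where "J = {a, b, c, e}"
  have JI: "J \<subseteq> I" and finJ: "finite J" using abce by (auto simp: J_def)
  have eq: "(\<lambda>\<omega>. X a \<omega> * X b \<omega> * X c \<omega> * X e \<omega>) = (\<lambda>\<omega>. \<Prod>x\<in>J. X x \<omega> ^ cnt4 a b c e x)"
    using prod_cnt4[OF finJ] by (auto simp: J_def)
  have indJ: "indep_vars (\<lambda>_. borel) (\<lambda>x \<omega>. X x \<omega> ^ cnt4 a b c e x) J"
    by (rule indep_vars_compose2[OF indep_vars_subset[OF ind JI]]) auto
  have intx: "\<And>x. x \<in> J \<Longrightarrow> integrable M (\<lambda>\<omega>. X x \<omega> ^ cnt4 a b c e x)"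
    using normal_mom(1)[OF vpos D] JI by auto
  show "integrable M (\<lambda>\<omega>. X a \<omega> * X b \<omega> * X c \<omega> * X e \<omega>)"
    unfolding eq by (rule indep_vars_integrable[OF finJ indJ intx])
  have "(\<integral>\<omega>. X a \<omega> * X b \<omega> * X c \<omega> * X e \<omega> \<partial>M) = (\<Prod>x\<in>J. \<integral>\<omega>. X x \<omega> ^ cnt4 a b c e x \<partial>M)"
    unfolding eq by (rule indep_vars_lebesgue_integral[OF finJ indJ intx])
  also have "\<dots> = (\<Prod>x\<in>J. mm (v x) (cnt4 a b c e x))"
  proof (intro prod.cong refl)
    fix x assume x: "x \<in> J"
    have "cnt4 a b c e x \<le> 4" by (simp add: cnt4_def)
    then show "(\<integral>\<omega>. X x \<omega> ^ cnt4 a b c e x \<partial>M) = mm (v x) (cnt4 a b c e x)"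
      using normal_mom(2)[OF vpos D] x JI by (auto simp: mm_def prob_space)
  qed
  also have "\<dots> = wk v a b c e" unfolding J_def by (rule mm_wk)
  finally show "(\<integral>\<omega>. X a \<omega> * X b \<omega> * X c \<omega> * X e \<omega> \<partial>M) = wk v a b c e" .
qed

lemma sum4_t1:
  fixes A :: "'i \<Rightarrow> 'i \<Rightarrow> real"
  assumes "finite I"
  shows "(\<Sum>x\<in>I. \<Sum>y\<in>I. \<Sum>z\<in>I. \<Sum>w\<in>I. A x y * A z w * (if x = y \<and> z = w then v x * v z else 0))
     = (\<Sum>x\<in>I. A x x * v x)\<^sup>2"
proof -
  have "\<And>x y z. z \<in> I \<Longrightarrow> (\<Sum>w\<in>I. A x y * A z w * (if x = y \<and> z = w then v x * v z else 0))
      = (if x = y then A x x * A z z * v x * v z else 0)"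
  proof -
    fix x y z assume z: "z \<in> I"
    have "(\<Sum>w\<in>I. A x y * A z w * (if x = y \<and> z = w then v x * v z else 0))
       = (\<Sum>w\<in>I. if w = z then (if x = y then A x x * A z z * v x * v z else 0) else 0)"
      by (intro sum.cong) auto
    also have "\<dots> = (if x = y then A x x * A z z * v x * v z else 0)" using assms z by simp
    finally show "(\<Sum>w\<in>I. A x y * A z w * (if x = y \<and> z = w then v x * v z else 0))
      = (if x = y then A x x * A z z * v x * v z else 0)" .
  qed
  then have "(\<Sum>x\<in>I. \<Sum>y\<in>I. \<Sum>z\<in>I. \<Sum>w\<in>I. A x y * A z w * (if x = y \<and> z = w then v x * v z else 0))
      = (\<Sum>x\<in>I. \<Sum>y\<in>I. \<Sum>z\<in>I. if x = y then A x x * A z z * v x * v z else 0)"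
    by simp
  also have "\<dots> = (\<Sum>x\<in>I. \<Sum>y\<in>I. if y = x then (\<Sum>z\<in>I. A x x * A z z * v x * v z) else 0)"
    by (intro sum.cong) auto
  also have "\<dots> = (\<Sum>x\<in>I. \<Sum>z\<in>I. A x x * A z z * v x * v z)"
    using assms by simp
  also have "\<dots> = (\<Sum>x\<in>I. A x x * v x)\<^sup>2"
    by (simp add: power2_eq_square sum_product mult_ac)
  finally show ?thesis .
qed

lemma sum4_t2:
  fixes A :: "'i \<Rightarrow> 'i \<Rightarrow> real"
  assumes "finite I"
  shows "(\<Sum>x\<in>I. \<Sum>y\<in>I. \<Sum>z\<in>I. \<Sum>w\<in>I. A x y * A z w * (if x = z \<and> y = w then v x * v y else 0))
     = (\<Sum>x\<in>I. \<Sum>y\<in>I. A x y * A x y * v x * v y)"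
proof -
  have "\<And>x y z. y \<in> I \<Longrightarrow> (\<Sum>w\<in>I. A x y * A z w * (if x = z \<and> y = w then v x * v y else 0))
      = (if z = x then A x y * A x y * v x * v y else 0)"
  proof -
    fix x y z assume y: "y \<in> I"
    have "(\<Sum>w\<in>I. A x y * A z w * (if x = z \<and> y = w then v x * v y else 0))
       = (\<Sum>w\<in>I. if w = y then (if z = x then A x y * A x y * v x * v y else 0) else 0)"
      by (intro sum.cong) auto
    also have "\<dots> = (if z = x then A x y * A x y * v x * v y else 0)" using assms y by simp
    finally show "(\<Sum>w\<in>I. A x y * A z w * (if x = z \<and> y = w then v x * v y else 0))
      = (if z = x then A x y * A x y * v x * v y else 0)" .
  qed
  then have "(\<Sum>x\<in>I. \<Sum>y\<in>I. \<Sum>z\<in>I. \<Sum>w\<in>I. A x y * A z w * (if x = z \<and> y = w then v x * v y else 0))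
      = (\<Sum>x\<in>I. \<Sum>y\<in>I. \<Sum>z\<in>I. if z = x then A x y * A x y * v x * v y else 0)"
    by simp
  also have "\<dots> = (\<Sum>x\<in>I. \<Sum>y\<in>I. A x y * A x y * v x * v y)"
    using assms by simp
  finally show ?thesis .
qed

lemma sum4_t3:
  fixes A :: "'i \<Rightarrow> 'i \<Rightarrow> real"
  assumes "finite I"
  shows "(\<Sum>x\<in>I. \<Sum>y\<in>I. \<Sum>z\<in>I. \<Sum>w\<in>I. A x y * A z w * (if x = w \<and> y = z then v x * v y else 0))
     = (\<Sum>x\<in>I. \<Sum>y\<in>I. A x y * A y x * v x * v y)"
proof -
  have "\<And>x y z. x \<in> I \<Longrightarrow> (\<Sum>w\<in>I. A x y * A z w * (if x = w \<and> y = z then v x * v y else 0))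
      = (if z = y then A x y * A y x * v x * v y else 0)"
  proof -
    fix x y z assume x: "x \<in> I"
    have "(\<Sum>w\<in>I. A x y * A z w * (if x = w \<and> y = z then v x * v y else 0))
       = (\<Sum>w\<in>I. if w = x then (if z = y then A x y * A y x * v x * v y else 0) else 0)"
      by (intro sum.cong) auto
    also have "\<dots> = (if z = y then A x y * A y x * v x * v y else 0)" using assms x by simp
    finally show "(\<Sum>w\<in>I. A x y * A z w * (if x = w \<and> y = z then v x * v y else 0))
      = (if z = y then A x y * A y x * v x * v y else 0)" .
  qed
  then have "(\<Sum>x\<in>I. \<Sum>y\<in>I. \<Sum>z\<in>I. \<Sum>w\<in>I. A x y * A z w * (if x = w \<and> y = z then v x * v y else 0))
      = (\<Sum>x\<in>I. \<Sum>y\<in>I. \<Sum>z\<in>I. if z = y then A x y * A y x * v x * v y else 0)"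
    by simp
  also have "\<dots> = (\<Sum>x\<in>I. \<Sum>y\<in>I. A x y * A y x * v x * v y)"
    using assms by simp
  finally show ?thesis .
qed

lemma sum_sq4:
  fixes f :: "'i \<Rightarrow> 'i \<Rightarrow> real"
  shows "(\<Sum>x\<in>I. \<Sum>y\<in>I. f x y)\<^sup>2 = (\<Sum>x\<in>I. \<Sum>y\<in>I. \<Sum>z\<in>I. \<Sum>w\<in>I. f x y * f z w)"
proof -
  have a: "\<And>T. (\<Sum>x\<in>I. \<Sum>y\<in>I. f x y) * T = (\<Sum>x\<in>I. \<Sum>y\<in>I. f x y * T)"
    by (simp add: sum_distrib_right)
  have b: "\<And>c. c * (\<Sum>z\<in>I. \<Sum>w\<in>I. f z w) = (\<Sum>z\<in>I. \<Sum>w\<in>I. c * f z w)"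
    by (simp add: sum_distrib_left)
  have "(\<Sum>x\<in>I. \<Sum>y\<in>I. f x y)\<^sup>2 = (\<Sum>x\<in>I. \<Sum>y\<in>I. f x y) * (\<Sum>x\<in>I. \<Sum>y\<in>I. f x y)"
    by (simp add: power2_eq_square)
  also have "\<dots> = (\<Sum>x\<in>I. \<Sum>y\<in>I. f x y * (\<Sum>x\<in>I. \<Sum>y\<in>I. f x y))" by (rule a)
  also have "\<dots> = (\<Sum>x\<in>I. \<Sum>y\<in>I. \<Sum>z\<in>I. \<Sum>w\<in>I. f x y * f z w)" by (simp only: b)
  finally show ?thesis .
qed

lemma (in prob_space) quad_moment:
  assumes fin: "finite I" and ind: "indep_vars (\<lambda>_. borel) X I"
    and D: "\<And>x. x \<in> I \<Longrightarrow> distributed M lborel (X x) (\<lambda>y. ennreal (normal_density 0 (sqrt (v x)) y))"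
    and vpos: "\<And>x. x \<in> I \<Longrightarrow> 0 < v x"
  shows "integrable M (\<lambda>\<omega>. (\<Sum>x\<in>I. \<Sum>y\<in>I. A x y * X x \<omega> * X y \<omega>)\<^sup>2)"
    and "(\<integral>\<omega>. (\<Sum>x\<in>I. \<Sum>y\<in>I. A x y * X x \<omega> * X y \<omega>)\<^sup>2 \<partial>M) =
      (\<Sum>x\<in>I. A x x * v x)\<^sup>2 + (\<Sum>x\<in>I. \<Sum>y\<in>I. A x y * (A x y + A y x) * v x * v y)"
proof -
  have sq: "\<And>\<omega>. (\<Sum>x\<in>I. \<Sum>y\<in>I. A x y * X x \<omega> * X y \<omega>)\<^sup>2 =
    (\<Sum>x\<in>I. \<Sum>y\<in>I. \<Sum>z\<in>I. \<Sum>w\<in>I. A x y * A z w * (X x \<omega> * X y \<omega> * X z \<omega> * X w \<omega>))"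
    unfolding sum_sq4 by (simp add: mult_ac)
  have int4: "\<And>x y z w. x \<in> I \<Longrightarrow> y \<in> I \<Longrightarrow> z \<in> I \<Longrightarrow> w \<in> I \<Longrightarrow>
      integrable M (\<lambda>\<omega>. A x y * A z w * (X x \<omega> * X y \<omega> * X z \<omega> * X w \<omega>))"
    using wick4(1)[OF fin ind D vpos] by auto
  show "integrable M (\<lambda>\<omega>. (\<Sum>x\<in>I. \<Sum>y\<in>I. A x y * X x \<omega> * X y \<omega>)\<^sup>2)"
    unfolding sq by (auto intro!: Bochner_Integration.integrable_sum int4)
  have "(\<integral>\<omega>. (\<Sum>x\<in>I. \<Sum>y\<in>I. A x y * X x \<omega> * X y \<omega>)\<^sup>2 \<partial>M) =
     (\<Sum>x\<in>I. \<Sum>y\<in>I. \<Sum>z\<in>I. \<Sum>w\<in>I. A x y * A z w * wk v x y z w)"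
    unfolding sq
    apply (subst Bochner_Integration.integral_sum, auto intro!: Bochner_Integration.integrable_sum int4)
    apply (intro sum.cong refl)
    apply (subst Bochner_Integration.integral_sum, auto intro!: Bochner_Integration.integrable_sum int4)
    apply (intro sum.cong refl)
    apply (subst Bochner_Integration.integral_sum, auto intro!: Bochner_Integration.integrable_sum int4)
    apply (intro sum.cong refl)
    apply (subst Bochner_Integration.integral_sum)
     apply (rule int4; assumption)
    apply (intro sum.cong refl)
    apply (simp only: integral_mult_right_zero wick4(2)[OF fin ind D vpos])
    done
  also have "\<dots> = (\<Sum>x\<in>I. \<Sum>y\<in>I. \<Sum>z\<in>I. \<Sum>w\<in>I. A x y * A z w * (if x = y \<and> z = w then v x * v z else 0))
     + (\<Sum>x\<in>I. \<Sum>y\<in>I. \<Sum>z\<in>I. \<Sum>w\<in>I. A x y * A z w * (if x = z \<and> y = w then v x * v y else 0))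
     + (\<Sum>x\<in>I. \<Sum>y\<in>I. \<Sum>z\<in>I. \<Sum>w\<in>I. A x y * A z w * (if x = w \<and> y = z then v x * v y else 0))"
    by (simp add: wk_def distrib_left sum.distrib)
  also have "\<dots> = (\<Sum>x\<in>I. A x x * v x)\<^sup>2 + (\<Sum>x\<in>I. \<Sum>y\<in>I. A x y * (A x y + A y x) * v x * v y)"
    unfolding sum4_t1[OF fin] sum4_t2[OF fin] sum4_t3[OF fin]
    by (simp add: distrib_left distrib_right sum.distrib)
  finally show "(\<integral>\<omega>. (\<Sum>x\<in>I. \<Sum>y\<in>I. A x y * X x \<omega> * X y \<omega>)\<^sup>2 \<partial>M) =
      (\<Sum>x\<in>I. A x x * v x)\<^sup>2 + (\<Sum>x\<in>I. \<Sum>y\<in>I. A x y * (A x y + A y x) * v x * v y)" .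
qed

definition grid :: "real set \<Rightarrow> nat \<Rightarrow> real" where
  "grid G k = sorted_list_of_set G ! k"

definition gN :: "real set \<Rightarrow> nat" where
  "gN G = card G - 1"

lemma telescope_ivl:
  fixes f :: "nat \<Rightarrow> real"
  assumes "p \<le> q"
  shows "(\<Sum>m\<in>{p..<q}. f (Suc m) - f m) = f q - f p"
  using assms
proof (induction q)
  case 0 then show ?case by simp
next
  case (Suc q)
  show ?case
  proof (cases "p = Suc q")
    case True then show ?thesis by simp
  next
    case False
    then have "p \<le> q" using Suc.prems by simp
    then show ?thesis using Suc.IH by simp
  qed
qed

context
  fixes G :: "real set"
  assumes finG: "finite G" and neG: "G \<noteq> {}"
begin

lemma grid_len: "length (sorted_list_of_set G) = Suc (gN G)"
  using finG neG by (simp add: gN_def) (metis Suc_pred card_gt_0_iff neG)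

lemma grid_less: "m < m' \<Longrightarrow> m' \<le> gN G \<Longrightarrow> grid G m < grid G m'"
  unfolding grid_def
  by (rule sorted_wrt_nth_less[OF strict_sorted_list_of_set]) (use grid_len in auto)

lemma grid_less_iff: "m \<le> gN G \<Longrightarrow> m' \<le> gN G \<Longrightarrow> grid G m < grid G m' \<longleftrightarrow> m < m'"
  using grid_less by (metis linorder_neq_iff order_less_asym)

lemma grid_le_iff: "m \<le> gN G \<Longrightarrow> m' \<le> gN G \<Longrightarrow> grid G m \<le> grid G m' \<longleftrightarrow> m \<le> m'"
  using grid_less_iff by (meson not_le)

lemma grid_in: "m \<le> gN G \<Longrightarrow> grid G m \<in> G"
  unfolding grid_def using grid_len finG
  by (metis less_Suc_eq_le nth_mem set_sorted_list_of_set)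

lemma grid_ex: "u \<in> G \<Longrightarrow> \<exists>p\<le>gN G. grid G p = u"
  unfolding grid_def using grid_len finG
  by (metis in_set_conv_nth less_Suc_eq_le set_sorted_list_of_set)

lemma grid_telescope:
  fixes f :: "real \<Rightarrow> real"
  assumes u: "u \<in> G" and u': "u' \<in> G" and le: "u \<le> u'"
  shows "f u' - f u = (\<Sum>m<gN G. if u \<le> grid G m \<and> grid G m < u'
            then f (grid G (Suc m)) - f (grid G m) else 0)"
proof -
  obtain p where p: "p \<le> gN G" "grid G p = u" using grid_ex[OF u] by auto
  obtain q where q: "q \<le> gN G" "grid G q = u'" using grid_ex[OF u'] by auto
  have pq: "p \<le> q" using le p q grid_le_iff by auto
  have "(\<Sum>m<gN G. if u \<le> grid G m \<and> grid G m < u' then f (grid G (Suc m)) - f (grid G m) else 0)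
     = (\<Sum>m<gN G. if m \<in> {p..<q} then f (grid G (Suc m)) - f (grid G m) else 0)"
    apply (intro sum.cong refl)
    using p q grid_le_iff grid_less_iff by auto
  also have "\<dots> = (\<Sum>m\<in>{..<gN G} \<inter> {p..<q}. f (grid G (Suc m)) - f (grid G m))"
    by (simp add: sum.inter_restrict)
  also have "{..<gN G} \<inter> {p..<q} = {p..<q}" using q by auto
  also have "(\<Sum>m\<in>{p..<q}. f (grid G (Suc m)) - f (grid G m)) = f u' - f u"
    using telescope_ivl[OF pq, of "\<lambda>m. f (grid G m)"] p q by simp
  finally show ?thesis by simp
qed

end

lemma bm_grid:
  assumes bm: "brownian_motion M d W" and finG: "finite G" and neG: "G \<noteq> {}" and G01: "G \<subseteq> {0..1}"
  shows "prob_space.indep_vars M (\<lambda>_. borel)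
          (\<lambda>(i, k) \<omega>. W i (grid G (Suc k)) \<omega> - W i (grid G k) \<omega>) ({1..d} \<times> {..<gN G})"
    and "\<And>i k. i \<in> {1..d} \<Longrightarrow> k < gN G \<Longrightarrow>
          distributed M lborel (\<lambda>\<omega>. W i (grid G (Suc k)) \<omega> - W i (grid G k) \<omega>)
             (\<lambda>x. ennreal (normal_density 0 (sqrt (grid G (Suc k) - grid G k)) x))"
proof -
  have inc: "\<forall>k<gN G. grid G k < grid G (Suc k)" using grid_less[OF finG neG] by auto
  have z: "0 \<le> grid G 0" using grid_in[OF finG neG, of 0] G01 by auto
  have o: "grid G (gN G) \<le> 1" using grid_in[OF finG neG, of "gN G"] G01 by auto
  from bm have H: "\<And>n ts. (\<forall>k<n. ts k < ts (Suc k)) \<and> 0 \<le> ts 0 \<and> ts n \<le> 1 \<longrightarrow>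
        prob_space.indep_vars M (\<lambda>_. borel)
          (\<lambda>(i, k) \<omega>. W i (ts (Suc k)) \<omega> - W i (ts k) \<omega>) ({1..d} \<times> {..<n}) \<and>
        (\<forall>i\<in>{1..d}. \<forall>k<n.
           distributed M lborel (\<lambda>\<omega>. W i (ts (Suc k)) \<omega> - W i (ts k) \<omega>)
             (\<lambda>x. ennreal (normal_density 0 (sqrt (ts (Suc k) - ts k)) x)))"
    unfolding brownian_motion_def by blast
  note H2 = H[of "gN G" "grid G", rule_format, OF conjI[OF inc conjI[OF z o]]]
  show "prob_space.indep_vars M (\<lambda>_. borel)
          (\<lambda>(i, k) \<omega>. W i (grid G (Suc k)) \<omega> - W i (grid G k) \<omega>) ({1..d} \<times> {..<gN G})"
    using H2 by blast
  show "\<And>i k. i \<in> {1..d} \<Longrightarrow> k < gN G \<Longrightarrow>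
          distributed M lborel (\<lambda>\<omega>. W i (grid G (Suc k)) \<omega> - W i (grid G k) \<omega>)
             (\<lambda>x. ennreal (normal_density 0 (sqrt (grid G (Suc k) - grid G k)) x))"
    using H2 by blast
qed

lemma (in prob_space) quad_bound:
  assumes fin: "finite I" and ind: "indep_vars (\<lambda>_. borel) X I"
    and D: "\<And>x. x \<in> I \<Longrightarrow> distributed M lborel (X x) (\<lambda>y. ennreal (normal_density 0 (sqrt (v x)) y))"
    and vpos: "\<And>x. x \<in> I \<Longrightarrow> 0 < v x"
  shows "integrable M (\<lambda>\<omega>. (\<Sum>x\<in>I. \<Sum>y\<in>I. A x y * X x \<omega> * X y \<omega>)\<^sup>2)"
    and "(\<integral>\<omega>. (\<Sum>x\<in>I. \<Sum>y\<in>I. A x y * X x \<omega> * X y \<omega>)\<^sup>2 \<partial>M) \<le>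
      (\<Sum>x\<in>I. A x x * v x)\<^sup>2 + 2 * (\<Sum>x\<in>I. \<Sum>y\<in>I. (A x y)\<^sup>2 * v x * v y)"
proof -
  show "integrable M (\<lambda>\<omega>. (\<Sum>x\<in>I. \<Sum>y\<in>I. A x y * X x \<omega> * X y \<omega>)\<^sup>2)"
    by (rule quad_moment(1)[OF fin ind D vpos])
  have sw: "(\<Sum>x\<in>I. \<Sum>y\<in>I. (A y x)\<^sup>2 * v x * v y) = (\<Sum>x\<in>I. \<Sum>y\<in>I. (A x y)\<^sup>2 * v x * v y)"
    by (subst sum.swap) (simp add: mult_ac)
  have "0 \<le> (\<Sum>x\<in>I. \<Sum>y\<in>I. (A x y - A y x)\<^sup>2 * v x * v y)"
    using vpos by (intro sum_nonneg) (simp add: less_imp_le)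
  also have "\<dots> = (\<Sum>x\<in>I. \<Sum>y\<in>I. (A x y)\<^sup>2 * v x * v y) + (\<Sum>x\<in>I. \<Sum>y\<in>I. (A y x)\<^sup>2 * v x * v y)
       - 2 * (\<Sum>x\<in>I. \<Sum>y\<in>I. A x y * A y x * v x * v y)"
    by (simp add: power2_eq_square algebra_simps sum.distrib sum_subtractf sum_distrib_left)
  finally have cr: "(\<Sum>x\<in>I. \<Sum>y\<in>I. A x y * A y x * v x * v y) \<le> (\<Sum>x\<in>I. \<Sum>y\<in>I. (A x y)\<^sup>2 * v x * v y)"
    using sw by simp
  have "(\<Sum>x\<in>I. \<Sum>y\<in>I. A x y * (A x y + A y x) * v x * v y) =
     (\<Sum>x\<in>I. \<Sum>y\<in>I. (A x y)\<^sup>2 * v x * v y) + (\<Sum>x\<in>I. \<Sum>y\<in>I. A x y * A y x * v x * v y)"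
    by (simp add: power2_eq_square algebra_simps sum.distrib)
  then show "(\<integral>\<omega>. (\<Sum>x\<in>I. \<Sum>y\<in>I. A x y * X x \<omega> * X y \<omega>)\<^sup>2 \<partial>M) \<le>
      (\<Sum>x\<in>I. A x x * v x)\<^sup>2 + 2 * (\<Sum>x\<in>I. \<Sum>y\<in>I. (A x y)\<^sup>2 * v x * v y)"
    using quad_moment(2)[OF fin ind D vpos, of A] cr by simp
qed

definition incr :: "(nat \<Rightarrow> real \<Rightarrow> 'a \<Rightarrow> real) \<Rightarrow> real set \<Rightarrow> nat \<Rightarrow> nat \<Rightarrow> 'a \<Rightarrow> real" where
  "incr W G c m \<omega> = W c (grid G (Suc m)) \<omega> - W c (grid G m) \<omega>"

definition sg :: "real set \<Rightarrow> nat \<Rightarrow> real" where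
  "sg G m = grid G (Suc m) - grid G m"

lemma sum_prod_sel:
  fixes g :: "nat \<Rightarrow> real"
  assumes "i \<in> C" "finite C"
  shows "(\<Sum>x\<in>C \<times> B. if fst x = i then g (snd x) else 0) = (\<Sum>m\<in>B. g m)"
proof -
  have "(\<Sum>x\<in>C \<times> B. if fst x = i then g (snd x) else 0) = (\<Sum>c\<in>C. \<Sum>m\<in>B. if c = i then g m else 0)"
    by (simp add: sum.cartesian_product split_def)
  also have "\<dots> = (\<Sum>c\<in>C. if c = i then (\<Sum>m\<in>B. g m) else 0)"
    by (intro sum.cong) auto
  also have "\<dots> = (\<Sum>m\<in>B. g m)" using assms by simp
  finally show ?thesis .
qed

lemma bm_quad:
  assumes bm: "brownian_motion M d W" and finG: "finite G" and neG: "G \<noteq> {}" and G01: "G \<subseteq> {0..1}"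
    and i: "i \<in> {1..d}" and j: "j \<in> {1..d}"
  shows "integrable M (\<lambda>\<omega>. (\<Sum>m<gN G. \<Sum>l<gN G. K m l * incr W G i m \<omega> * incr W G j l \<omega>)\<^sup>2)"
    and "(\<integral>\<omega>. (\<Sum>m<gN G. \<Sum>l<gN G. K m l * incr W G i m \<omega> * incr W G j l \<omega>)\<^sup>2 \<partial>M) \<le>
      (if i = j then (\<Sum>m<gN G. K m m * sg G m) else 0)\<^sup>2
      + 2 * (\<Sum>m<gN G. \<Sum>l<gN G. (K m l)\<^sup>2 * sg G m * sg G l)"
proof -
  have ps: "prob_space M" using bm by (simp add: brownian_motion_def)
  define I where "I = {1..d} \<times> {..<gN G}"
  define X where "X = (\<lambda>(c, k) \<omega>. W c (grid G (Suc k)) \<omega> - W c (grid G k) \<omega>)"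
  define v where "v = (\<lambda>x::nat\<times>nat. sg G (snd x))"
  define A where "A = (\<lambda>(x::nat\<times>nat) (y::nat\<times>nat). if fst x = i \<and> fst y = j then K (snd x) (snd y) else 0)"
  have fin: "finite I" by (simp add: I_def)
  have ind: "prob_space.indep_vars M (\<lambda>_. borel) X I"
    unfolding X_def I_def by (rule bm_grid(1)[OF bm finG neG G01])
  have D: "\<And>x. x \<in> I \<Longrightarrow> distributed M lborel (X x) (\<lambda>y. ennreal (normal_density 0 (sqrt (v x)) y))"
    using bm_grid(2)[OF bm finG neG G01] by (auto simp: I_def X_def v_def sg_def)
  have vpos: "\<And>x. x \<in> I \<Longrightarrow> 0 < v x"
    using grid_less[OF finG neG] by (auto simp: I_def v_def sg_def)
  have Q: "\<And>\<omega>. (\<Sum>x\<in>I. \<Sum>y\<in>I. A x y * X x \<omega> * X y \<omega>) =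
      (\<Sum>m<gN G. \<Sum>l<gN G. K m l * incr W G i m \<omega> * incr W G j l \<omega>)"
  proof -
    fix \<omega>
    have "(\<Sum>x\<in>I. \<Sum>y\<in>I. A x y * X x \<omega> * X y \<omega>) =
        (\<Sum>x\<in>I. if fst x = i then (\<Sum>y\<in>I. if fst y = j then K (snd x) (snd y) * incr W G i (snd x) \<omega> * incr W G j (snd y) \<omega> else 0) else 0)"
    proof (intro sum.cong refl)
      fix x assume "x \<in> I"
      have pw: "\<And>y. A x y * X x \<omega> * X y \<omega> = (if fst x = i then (if fst y = j then K (snd x) (snd y) * incr W G i (snd x) \<omega> * incr W G j (snd y) \<omega> else 0) else 0)"
        by (auto simp: A_def X_def incr_def split: prod.splits)
      show "(\<Sum>y\<in>I. A x y * X x \<omega> * X y \<omega>) = (if fst x = i then (\<Sum>y\<in>I. if fst y = j then K (snd x) (snd y) * incr W G i (snd x) \<omega> * incr W G j (snd y) \<omega> else 0) else 0)"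
        unfolding pw by simp
    qed
    also have "\<dots> = (\<Sum>x\<in>I. if fst x = i then (\<Sum>l<gN G. K (snd x) l * incr W G i (snd x) \<omega> * incr W G j l \<omega>) else 0)"
    proof (intro sum.cong refl)
      fix x
      show "(if fst x = i then (\<Sum>y\<in>I. if fst y = j then K (snd x) (snd y) * incr W G i (snd x) \<omega> * incr W G j (snd y) \<omega> else 0) else 0) = (if fst x = i then (\<Sum>l<gN G. K (snd x) l * incr W G i (snd x) \<omega> * incr W G j l \<omega>) else 0)"
        unfolding I_def by (simp only: sum_prod_sel[OF j finite_atLeastAtMost, where B="{..<gN G}", of "\<lambda>l. K (snd x) l * incr W G i (snd x) \<omega> * incr W G j l \<omega>"])
    qed
    also have "\<dots> = (\<Sum>m<gN G. \<Sum>l<gN G. K m l * incr W G i m \<omega> * incr W G j l \<omega>)"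
      unfolding I_def by (rule sum_prod_sel[OF i finite_atLeastAtMost])
    finally show "(\<Sum>x\<in>I. \<Sum>y\<in>I. A x y * X x \<omega> * X y \<omega>) =
      (\<Sum>m<gN G. \<Sum>l<gN G. K m l * incr W G i m \<omega> * incr W G j l \<omega>)" .
  qed
  have tr: "(\<Sum>x\<in>I. A x x * v x) = (if i = j then (\<Sum>m<gN G. K m m * sg G m) else 0)"
  proof (cases "i = j")
    case True
    have "(\<Sum>x\<in>I. A x x * v x) = (\<Sum>x\<in>I. if fst x = i then K (snd x) (snd x) * sg G (snd x) else 0)"
      by (intro sum.cong refl) (auto simp: A_def v_def True)
    also have "\<dots> = (\<Sum>m<gN G. K m m * sg G m)"
      unfolding I_def by (rule sum_prod_sel[OF i finite_atLeastAtMost])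
    finally show ?thesis using True by simp
  next
    case False
    then show ?thesis by (auto simp: A_def intro!: sum.neutral)
  qed
  have sq: "(\<Sum>x\<in>I. \<Sum>y\<in>I. (A x y)\<^sup>2 * v x * v y) = (\<Sum>m<gN G. \<Sum>l<gN G. (K m l)\<^sup>2 * sg G m * sg G l)"
  proof -
    have "(\<Sum>x\<in>I. \<Sum>y\<in>I. (A x y)\<^sup>2 * v x * v y) =
        (\<Sum>x\<in>I. if fst x = i then (\<Sum>y\<in>I. if fst y = j then (K (snd x) (snd y))\<^sup>2 * sg G (snd x) * sg G (snd y) else 0) else 0)"
      by (intro sum.cong refl) (auto simp: A_def v_def intro!: sum.cong)
    also have "\<dots> = (\<Sum>x\<in>I. if fst x = i then (\<Sum>l<gN G. (K (snd x) l)\<^sup>2 * sg G (snd x) * sg G l) else 0)"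
    proof (intro sum.cong refl)
      fix x
      show "(if fst x = i then (\<Sum>y\<in>I. if fst y = j then (K (snd x) (snd y))\<^sup>2 * sg G (snd x) * sg G (snd y) else 0) else 0) = (if fst x = i then (\<Sum>l<gN G. (K (snd x) l)\<^sup>2 * sg G (snd x) * sg G l) else 0)"
        unfolding I_def by (simp only: sum_prod_sel[OF j finite_atLeastAtMost, where B="{..<gN G}", of "\<lambda>l. (K (snd x) l)\<^sup>2 * sg G (snd x) * sg G l"])
    qed
    also have "\<dots> = (\<Sum>m<gN G. \<Sum>l<gN G. (K m l)\<^sup>2 * sg G m * sg G l)"
      unfolding I_def by (rule sum_prod_sel[OF i finite_atLeastAtMost])
    finally show ?thesis .
  qed
  show "integrable M (\<lambda>\<omega>. (\<Sum>m<gN G. \<Sum>l<gN G. K m l * incr W G i m \<omega> * incr W G j l \<omega>)\<^sup>2)"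
    using prob_space.quad_bound(1)[OF ps fin ind D vpos, of A] Q by simp
  show "(\<integral>\<omega>. (\<Sum>m<gN G. \<Sum>l<gN G. K m l * incr W G i m \<omega> * incr W G j l \<omega>)\<^sup>2 \<partial>M) \<le>
      (if i = j then (\<Sum>m<gN G. K m m * sg G m) else 0)\<^sup>2
      + 2 * (\<Sum>m<gN G. \<Sum>l<gN G. (K m l)\<^sup>2 * sg G m * sg G l)"
    using prob_space.quad_bound(2)[OF ps fin ind D vpos, of A] Q tr sq by simp
qed

definition ind :: "bool \<Rightarrow> real" where "ind b = (if b then 1 else 0)"

definition DP :: "real \<Rightarrow> real \<Rightarrow> nat \<Rightarrow> real set" where
  "DP s t n = (\<lambda>k. dyad s t n k) ` {..2^n}"

definition Kn :: "bool \<Rightarrow> real \<Rightarrow> real \<Rightarrow> nat \<Rightarrow> real set \<Rightarrow> nat \<Rightarrow> nat \<Rightarrow> real" where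
  "Kn strat s t n G m l = (\<Sum>k<2^n.
     (ind (s \<le> grid G m \<and> grid G m < dyad s t n k)
      + (if strat then 1/2 else 0) * ind (dyad s t n k \<le> grid G m \<and> grid G m < dyad s t n (Suc k)))
     * ind (dyad s t n k \<le> grid G l \<and> grid G l < dyad s t n (Suc k)))"

lemma dyad_0[simp]: "dyad s t n 0 = s" by (simp add: dyad_def)
lemma dyad_top[simp]: "dyad s t n (2^n) = t" by (simp add: dyad_def)
lemma dyad_mono: "s \<le> t \<Longrightarrow> k \<le> k' \<Longrightarrow> dyad s t n k \<le> dyad s t n k'"
  unfolding dyad_def by (intro add_left_mono divide_right_mono mult_right_mono) auto
lemma dyad_Suc: "dyad s t n (Suc k) - dyad s t n k = (t - s) / 2^n"
  by (simp add: dyad_def field_simps)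
lemma dyad_in: "s \<le> t \<Longrightarrow> k \<le> 2^n \<Longrightarrow> s \<le> dyad s t n k \<and> dyad s t n k \<le> t"
  using dyad_mono[of s t 0 k n] dyad_mono[of s t k "2^n" n] by simp
lemma DP_sub: "s \<le> t \<Longrightarrow> 0 \<le> s \<Longrightarrow> t \<le> 1 \<Longrightarrow> DP s t n \<subseteq> {0..1}"
proof
  fix x assume st: "s \<le> t" "0 \<le> s" "t \<le> 1" and "x \<in> DP s t n"
  then obtain k where k: "k \<le> 2^n" "x = dyad s t n k" unfolding DP_def by auto
  show "x \<in> {0..1}" using dyad_in[OF st(1) k(1)] k(2) st by auto
qed
lemma DP_in: "k \<le> 2^n \<Longrightarrow> dyad s t n k \<in> DP s t n"
  unfolding DP_def by auto
lemma DP_fin: "finite (DP s t n)" unfolding DP_def by simp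

lemma lvl2_repr:
  assumes finG: "finite G" and DPG: "DP s t n \<subseteq> G" and st: "s \<le> t"
  shows "lvl2_sum strat W i j s t n \<omega> =
    (\<Sum>m<gN G. \<Sum>l<gN G. Kn strat s t n G m l * incr W G i m \<omega> * incr W G j l \<omega>)"
proof -
  have neG: "G \<noteq> {}" using DPG DP_in[of 0 n s t] by auto
  define c where "c = (if strat then 1/2 else 0 :: real)"
  define u where "u = dyad s t n"
  have uG: "\<And>k. k \<le> 2^n \<Longrightarrow> u k \<in> G" using DPG DP_in unfolding u_def by blast
  have tel: "\<And>a b c'. a \<in> G \<Longrightarrow> b \<in> G \<Longrightarrow> a \<le> b \<Longrightarrow>
      W c' b \<omega> - W c' a \<omega> = (\<Sum>m<gN G. ind (a \<le> grid G m \<and> grid G m < b) * incr W G c' m \<omega>)"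
    by (subst grid_telescope[OF finG neG, of _ _ "\<lambda>r. W _ r \<omega>"]) (auto simp: ind_def incr_def intro!: sum.cong)
  have trm: "\<And>k::nat. k < 2^n \<Longrightarrow>
     ((if strat then (W i (u k) \<omega> + W i (u (Suc k)) \<omega>) / 2 else W i (u k) \<omega>) - W i s \<omega>)
        * (W j (u (Suc k)) \<omega> - W j (u k) \<omega>)
     = (\<Sum>m<gN G. \<Sum>l<gN G. ((ind (s \<le> grid G m \<and> grid G m < u k)
      + c * ind (u k \<le> grid G m \<and> grid G m < u (Suc k)))
     * ind (u k \<le> grid G l \<and> grid G l < u (Suc k))) * incr W G i m \<omega> * incr W G j l \<omega>)"
  proof -
    fix k :: nat assume k: "k < 2^n"
    have sG: "s \<in> G" using uG[of 0] by (simp add: u_def)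
    have ukG: "u k \<in> G" and uk1G: "u (Suc k) \<in> G" using uG k by auto
    have suk: "s \<le> u k" using dyad_in[OF st, of k n] k unfolding u_def by simp
    have ukk: "u k \<le> u (Suc k)" unfolding u_def by (rule dyad_mono[OF st]) simp
    have "((if strat then (W i (u k) \<omega> + W i (u (Suc k)) \<omega>) / 2 else W i (u k) \<omega>) - W i s \<omega>)
       = (W i (u k) \<omega> - W i s \<omega>) + c * (W i (u (Suc k)) \<omega> - W i (u k) \<omega>)"
      by (simp add: c_def field_simps)
    also have "\<dots> = (\<Sum>m<gN G. (ind (s \<le> grid G m \<and> grid G m < u k)
      + c * ind (u k \<le> grid G m \<and> grid G m < u (Suc k))) * incr W G i m \<omega>)"
      unfolding tel[OF sG ukG suk] tel[OF ukG uk1G ukk]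
      by (simp add: sum_distrib_left sum.distrib[symmetric] distrib_right distrib_left mult_ac)
    finally have L: "((if strat then (W i (u k) \<omega> + W i (u (Suc k)) \<omega>) / 2 else W i (u k) \<omega>) - W i s \<omega>)
      = (\<Sum>m<gN G. (ind (s \<le> grid G m \<and> grid G m < u k)
      + c * ind (u k \<le> grid G m \<and> grid G m < u (Suc k))) * incr W G i m \<omega>)" .
    show "((if strat then (W i (u k) \<omega> + W i (u (Suc k)) \<omega>) / 2 else W i (u k) \<omega>) - W i s \<omega>)
        * (W j (u (Suc k)) \<omega> - W j (u k) \<omega>)
     = (\<Sum>m<gN G. \<Sum>l<gN G. ((ind (s \<le> grid G m \<and> grid G m < u k)
      + c * ind (u k \<le> grid G m \<and> grid G m < u (Suc k)))
     * ind (u k \<le> grid G l \<and> grid G l < u (Suc k))) * incr W G i m \<omega> * incr W G j l \<omega>)"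
      unfolding L tel[OF ukG uk1G ukk, of j] sum_product
      by (intro sum.cong refl) (simp add: mult_ac)
  qed
  have "lvl2_sum strat W i j s t n \<omega> = (\<Sum>k<2^n. \<Sum>m<gN G. \<Sum>l<gN G. ((ind (s \<le> grid G m \<and> grid G m < u k)
      + c * ind (u k \<le> grid G m \<and> grid G m < u (Suc k)))
     * ind (u k \<le> grid G l \<and> grid G l < u (Suc k))) * incr W G i m \<omega> * incr W G j l \<omega>)"
    unfolding lvl2_sum_def u_def[symmetric] using trm by (intro sum.cong refl) auto
  also have "\<dots> = (\<Sum>m<gN G. \<Sum>k<2^n. \<Sum>l<gN G. ((ind (s \<le> grid G m \<and> grid G m < u k)
      + c * ind (u k \<le> grid G m \<and> grid G m < u (Suc k)))
     * ind (u k \<le> grid G l \<and> grid G l < u (Suc k))) * incr W G i m \<omega> * incr W G j l \<omega>)"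
    by (rule sum.swap)
  also have "\<dots> = (\<Sum>m<gN G. \<Sum>l<gN G. \<Sum>k<2^n. ((ind (s \<le> grid G m \<and> grid G m < u k)
      + c * ind (u k \<le> grid G m \<and> grid G m < u (Suc k)))
     * ind (u k \<le> grid G l \<and> grid G l < u (Suc k))) * incr W G i m \<omega> * incr W G j l \<omega>)"
    by (intro sum.cong refl sum.swap)
  also have "\<dots> = (\<Sum>m<gN G. \<Sum>l<gN G. Kn strat s t n G m l * incr W G i m \<omega> * incr W G j l \<omega>)"
    unfolding Kn_def u_def c_def by (simp add: sum_distrib_right)
  finally show ?thesis .
qed

definition kr :: "bool \<Rightarrow> real \<Rightarrow> real \<Rightarrow> nat \<Rightarrow> real \<Rightarrow> real \<Rightarrow> real" where
  "kr strat s t n x y = (\<Sum>k<2^n.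
     (ind (s \<le> x \<and> x < dyad s t n k)
      + (if strat then 1/2 else 0) * ind (dyad s t n k \<le> x \<and> x < dyad s t n (Suc k)))
     * ind (dyad s t n k \<le> y \<and> y < dyad s t n (Suc k)))"

definition dr :: "real \<Rightarrow> real \<Rightarrow> nat \<Rightarrow> real \<Rightarrow> real \<Rightarrow> real" where
  "dr s t n x y = (\<Sum>k<2^n. ind (dyad s t n k \<le> x \<and> x < dyad s t n (Suc k))
     * ind (dyad s t n k \<le> y \<and> y < dyad s t n (Suc k)))"

definition kid :: "real \<Rightarrow> real \<Rightarrow> real \<Rightarrow> real \<Rightarrow> real" where
  "kid s t x y = ind (s \<le> x \<and> x < y \<and> y < t)"

definition blk :: "real \<Rightarrow> real \<Rightarrow> nat \<Rightarrow> real \<Rightarrow> int" where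
  "blk s t n y = \<lfloor>(y - s) / ((t - s) / 2^n)\<rfloor>"

lemma Kn_kr: "Kn strat s t n G m l = kr strat s t n (grid G m) (grid G l)"
  by (simp add: Kn_def kr_def)

context
  fixes s t :: real and n :: nat
  assumes st: "s < t"
begin

lemma blk_iff: "(dyad s t n k \<le> y \<and> y < dyad s t n (Suc k)) \<longleftrightarrow> blk s t n y = int k"
proof -
  define a where "a = (t - s) / 2^n"
  have a: "0 < a" using st by (simp add: a_def)
  have dk: "\<And>k. dyad s t n k = s + real k * a" by (simp add: dyad_def a_def)
  have "dyad s t n k \<le> y \<longleftrightarrow> real k \<le> (y - s) / a"
    using a unfolding dk by (simp add: le_divide_eq algebra_simps)
  moreover have "y < dyad s t n (Suc k) \<longleftrightarrow> (y - s) / a < real k + 1"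
    using a unfolding dk by (simp add: divide_less_eq algebra_simps)
  ultimately show ?thesis
    unfolding blk_def a_def[symmetric] by (simp add: floor_eq_iff)
qed

lemma blk_range: "(0 \<le> blk s t n y \<and> blk s t n y < 2^n) \<longleftrightarrow> (s \<le> y \<and> y < t)"
proof -
  define a where "a = (t - s) / 2^n"
  have a: "0 < a" using st by (simp add: a_def)
  have "0 \<le> blk s t n y \<longleftrightarrow> s \<le> y"
    unfolding blk_def a_def[symmetric] using a by (simp add: field_simps)
  moreover have "blk s t n y < 2^n \<longleftrightarrow> (y - s) / a < 2^n"
    unfolding blk_def a_def[symmetric] by (metis floor_less_iff of_int_numeral of_int_power)
  moreover have "(y - s) / a < 2^n \<longleftrightarrow> y < t"
    using a st by (simp add: a_def field_simps)
  ultimately show ?thesis by simp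
qed

lemma sum_blk:
  fixes f :: "nat \<Rightarrow> real"
  shows "(\<Sum>k<2^n. f k * ind (dyad s t n k \<le> y \<and> y < dyad s t n (Suc k)))
      = ind (s \<le> y \<and> y < t) * f (nat (blk s t n y))"
proof -
  have "(\<Sum>k<2^n. f k * ind (dyad s t n k \<le> y \<and> y < dyad s t n (Suc k)))
      = (\<Sum>k<2^n. if k = nat (blk s t n y) \<and> 0 \<le> blk s t n y then f (nat (blk s t n y)) else 0)"
    by (intro sum.cong refl) (auto simp: blk_iff ind_def)
  also have "\<dots> = ind (s \<le> y \<and> y < t) * f (nat (blk s t n y))"
  proof (cases "s \<le> y \<and> y < t")
    case True
    then have "0 \<le> blk s t n y" "nat (blk s t n y) < 2^n" using blk_range
      by auto
    then show ?thesis using True by (simp add: ind_def)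
  next
    case False
    then have "\<not> (0 \<le> blk s t n y \<and> nat (blk s t n y) < 2^n)" using blk_range
      by (metis nat_less_iff of_nat_numeral of_nat_power)
    then show ?thesis using False by (auto simp: ind_def intro!: sum.neutral)
  qed
  finally show ?thesis .
qed

lemma blk_bounds:
  assumes "s \<le> y" "y < t"
  shows "s \<le> dyad s t n (nat (blk s t n y))" "dyad s t n (nat (blk s t n y)) \<le> y"
        "y < dyad s t n (Suc (nat (blk s t n y)))" "dyad s t n (Suc (nat (blk s t n y))) \<le> t"
proof -
  have r: "0 \<le> blk s t n y" "blk s t n y < 2^n" using blk_range assms by auto
  then have k: "nat (blk s t n y) < 2^n" by (metis nat_less_iff of_nat_numeral of_nat_power)
  have b: "dyad s t n (nat (blk s t n y)) \<le> y \<and> y < dyad s t n (Suc (nat (blk s t n y)))"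
    using blk_iff r by simp
  then show "dyad s t n (nat (blk s t n y)) \<le> y" "y < dyad s t n (Suc (nat (blk s t n y)))" by auto
  show "s \<le> dyad s t n (nat (blk s t n y))" using dyad_in[of s t] st k by auto
  show "dyad s t n (Suc (nat (blk s t n y))) \<le> t" using dyad_in[of s t "Suc (nat (blk s t n y))" n] st k by auto
qed

lemma kr_eq: "kr strat s t n x y = ind (s \<le> y \<and> y < t) *
   (ind (s \<le> x \<and> x < dyad s t n (nat (blk s t n y)))
    + (if strat then 1/2 else 0) * ind (dyad s t n (nat (blk s t n y)) \<le> x \<and> x < dyad s t n (Suc (nat (blk s t n y)))))"
  unfolding kr_def by (rule sum_blk)

lemma dr_eq: "dr s t n x y = ind (s \<le> y \<and> y < t) *
   ind (dyad s t n (nat (blk s t n y)) \<le> x \<and> x < dyad s t n (Suc (nat (blk s t n y))))"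
  unfolding dr_def by (rule sum_blk)

lemma kr_kid: "\<bar>kr strat s t n x y - kid s t x y\<bar> \<le> dr s t n x y"
proof (cases "s \<le> y \<and> y < t")
  case True
  note b = blk_bounds[OF conjunct1[OF True] conjunct2[OF True]]
  show ?thesis unfolding kr_eq dr_eq kid_def using True b
    by (auto simp: ind_def)
next
  case False
  then show ?thesis unfolding kr_eq dr_eq kid_def by (auto simp: ind_def)
qed

lemma dr_01: "0 \<le> dr s t n x y" "dr s t n x y \<le> 1"
  unfolding dr_eq by (auto simp: ind_def)

lemma dr_sq: "(dr s t n x y)\<^sup>2 \<le> dr s t n x y"
  unfolding dr_eq by (auto simp: ind_def)

lemma kr_diag: "kr strat s t n x x = (if strat then 1/2 else 0) * ind (s \<le> x \<and> x < t)"
proof (cases "s \<le> x \<and> x < t")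
  case True
  note b = blk_bounds[OF conjunct1[OF True] conjunct2[OF True]]
  show ?thesis unfolding kr_eq using True b by (auto simp: ind_def)
next
  case False
  then show ?thesis unfolding kr_eq by (auto simp: ind_def)
qed

lemma kr_sq: "(kr strat s t n x y)\<^sup>2 \<le> ind (s \<le> x \<and> x < t) * ind (s \<le> y \<and> y < t)"
proof (cases "s \<le> y \<and> y < t")
  case True
  note b = blk_bounds[OF conjunct1[OF True] conjunct2[OF True]]
  show ?thesis unfolding kr_eq using True b by (auto simp: ind_def power2_eq_square)
next
  case False
  then show ?thesis unfolding kr_eq by (auto simp: ind_def)
qed

end

context
  fixes G :: "real set"
  assumes finG: "finite G" and neG: "G \<noteq> {}"
begin

lemma sg_pos: "m < gN G \<Longrightarrow> 0 < sg G m"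
  using grid_less[OF finG neG, of m "Suc m"] by (simp add: sg_def)

lemma sum_ind_sg:
  assumes "a \<in> G" "b \<in> G" "a \<le> b"
  shows "(\<Sum>m<gN G. ind (a \<le> grid G m \<and> grid G m < b) * sg G m) = b - a"
  using grid_telescope[OF finG neG assms, of "\<lambda>r. r"]
  by (simp add: ind_def sg_def) (intro sum.cong refl, simp)

lemma sum_ind_sg2:
  assumes "a \<in> G" "b \<in> G" "a \<le> b" "c \<in> G" "e \<in> G" "c \<le> e"
  shows "(\<Sum>m<gN G. \<Sum>l<gN G. ind (a \<le> grid G m \<and> grid G m < b) * ind (c \<le> grid G l \<and> grid G l < e)
            * sg G m * sg G l) = (b - a) * (e - c)"
proof -
  have "(\<Sum>m<gN G. \<Sum>l<gN G. ind (a \<le> grid G m \<and> grid G m < b) * ind (c \<le> grid G l \<and> grid G l < e)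
            * sg G m * sg G l) = (\<Sum>m<gN G. ind (a \<le> grid G m \<and> grid G m < b) * sg G m) *
        (\<Sum>l<gN G. ind (c \<le> grid G l \<and> grid G l < e) * sg G l)"
    by (simp add: sum_product mult_ac)
  then show ?thesis using sum_ind_sg assms by simp
qed

lemma sum_dr:
  assumes st: "s < t" and DPG: "DP s t n \<subseteq> G"
  shows "(\<Sum>m<gN G. \<Sum>l<gN G. dr s t n (grid G m) (grid G l) * sg G m * sg G l) = (t - s)\<^sup>2 / 2^n"
proof -
  have "(\<Sum>m<gN G. \<Sum>l<gN G. dr s t n (grid G m) (grid G l) * sg G m * sg G l) =
     (\<Sum>m<gN G. \<Sum>l<gN G. \<Sum>k<2^n. ind (dyad s t n k \<le> grid G m \<and> grid G m < dyad s t n (Suc k))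
     * ind (dyad s t n k \<le> grid G l \<and> grid G l < dyad s t n (Suc k)) * sg G m * sg G l)"
    unfolding dr_def by (simp add: sum_distrib_right)
  also have "\<dots> = (\<Sum>k<2^n. \<Sum>m<gN G. \<Sum>l<gN G. ind (dyad s t n k \<le> grid G m \<and> grid G m < dyad s t n (Suc k))
     * ind (dyad s t n k \<le> grid G l \<and> grid G l < dyad s t n (Suc k)) * sg G m * sg G l)"
    by (subst sum.swap, subst (2) sum.swap) (rule refl)
  also have "\<dots> = (\<Sum>k<(2::nat)^n. ((t - s) / 2^n) * ((t - s) / 2^n))"
  proof (intro sum.cong refl)
    fix k assume k: "k \<in> {..<(2::nat)^n}"
    have in1: "dyad s t n k \<in> G" "dyad s t n (Suc k) \<in> G" using DPG DP_in k by auto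
    have le: "dyad s t n k \<le> dyad s t n (Suc k)" using dyad_mono st by simp
    show "(\<Sum>m<gN G. \<Sum>l<gN G. ind (dyad s t n k \<le> grid G m \<and> grid G m < dyad s t n (Suc k))
     * ind (dyad s t n k \<le> grid G l \<and> grid G l < dyad s t n (Suc k)) * sg G m * sg G l) =
      ((t - s) / 2^n) * ((t - s) / 2^n)"
      using sum_ind_sg2[OF in1 le in1 le] dyad_Suc by simp
  qed
  also have "\<dots> = (t - s)\<^sup>2 / 2^n" by (simp add: power2_eq_square field_simps)
  finally show ?thesis .
qed

end

lemma abs_le_quad:
  fixes x L :: real assumes L: "0 < L"
  shows "\<bar>x\<bar> \<le> (L * x\<^sup>2 + 1 / L) / 2"
proof -
  have "0 \<le> (L * \<bar>x\<bar> - 1)\<^sup>2" by simp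
  then have "0 \<le> L\<^sup>2 * x\<^sup>2 - 2 * L * \<bar>x\<bar> + 1" by (simp add: power2_eq_square algebra_simps)
  then have "L * (2 * \<bar>x\<bar>) \<le> L * (L * x\<^sup>2 + 1 / L)" using L by (simp add: power2_eq_square algebra_simps)
  then have "2 * \<bar>x\<bar> \<le> L * x\<^sup>2 + 1 / L" using L by (simp add: mult_le_cancel_left_pos)
  then show ?thesis by simp
qed

lemma as_conv_generic:
  fixes S :: "nat \<Rightarrow> 'a \<Rightarrow> real"
  assumes ps: "prob_space M" and meas: "\<And>n. S n \<in> borel_measurable M"
    and int: "\<And>n. integrable M (\<lambda>\<omega>. (S (Suc n) \<omega> - S n \<omega>)\<^sup>2)"
    and bnd: "\<And>n. (\<integral>\<omega>. (S (Suc n) \<omega> - S n \<omega>)\<^sup>2 \<partial>M) \<le> C / 2^n" and C: "0 \<le> C"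
  shows "AE \<omega> in M. convergent (\<lambda>n. S n \<omega>)"
proof -
  interpret prob_space M by (rule ps)
  define r where "r = 1 / sqrt 2"
  have r: "0 < r" "r < 1" by (auto simp: r_def)
  have b: "\<And>n. (\<integral>\<^sup>+\<omega>. ennreal \<bar>S (Suc n) \<omega> - S n \<omega>\<bar> \<partial>M) \<le> ennreal ((C + 1) / 2 * r^n)"
  proof -
    fix n
    define L where "L = sqrt 2 ^ n"
    have L: "0 < L" by (simp add: L_def)
    have L1: "L / 2^n = r^n" "1 / L = r^n"
      by (simp_all add: L_def r_def power_divide field_simps flip: power_mult_distrib)
    have "(\<integral>\<^sup>+\<omega>. ennreal \<bar>S (Suc n) \<omega> - S n \<omega>\<bar> \<partial>M)
        \<le> (\<integral>\<^sup>+\<omega>. ennreal ((L * (S (Suc n) \<omega> - S n \<omega>)\<^sup>2 + 1 / L) / 2) \<partial>M)"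
      by (intro nn_integral_mono ennreal_leI abs_le_quad L)
    also have "\<dots> = ennreal (\<integral>\<omega>. (L * (S (Suc n) \<omega> - S n \<omega>)\<^sup>2 + 1 / L) / 2 \<partial>M)"
      using ps int[of n] L
      by (intro nn_integral_eq_integral) auto
    also have "(\<integral>\<omega>. (L * (S (Suc n) \<omega> - S n \<omega>)\<^sup>2 + 1 / L) / 2 \<partial>M)
        = (L * (\<integral>\<omega>. (S (Suc n) \<omega> - S n \<omega>)\<^sup>2 \<partial>M) + 1 / L) / 2"
      using int[of n] by (simp add: prob_space)
    also have "\<dots> \<le> (L * (C / 2^n) + 1 / L) / 2"
      using mult_left_mono[OF bnd[of n], of L] L by (intro divide_right_mono add_right_mono) auto
    also have "\<dots> = (C + 1) / 2 * r^n"
    proof -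
      have "L * (C / 2^n) = C * r^n" using L1(1) by (metis times_divide_eq_left times_divide_eq_right mult.commute)
      then show ?thesis using L1(2) by (simp add: algebra_simps add_divide_distrib)
    qed
    finally show "(\<integral>\<^sup>+\<omega>. ennreal \<bar>S (Suc n) \<omega> - S n \<omega>\<bar> \<partial>M) \<le> ennreal ((C + 1) / 2 * r^n)"
      by (simp add: ennreal_leI)
  qed
  have [measurable]: "\<And>n. S n \<in> borel_measurable M" by (rule meas)
  have sg: "summable (\<lambda>n. (C + 1) / 2 * r^n)"
    using r by (intro summable_mult summable_geometric) (simp add: r_def)
  have "(\<integral>\<^sup>+\<omega>. (\<Sum>n. ennreal \<bar>S (Suc n) \<omega> - S n \<omega>\<bar>) \<partial>M) = (\<Sum>n. \<integral>\<^sup>+\<omega>. ennreal \<bar>S (Suc n) \<omega> - S n \<omega>\<bar> \<partial>M)"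
    by (intro nn_integral_suminf) measurable
  also have "\<dots> \<le> (\<Sum>n. ennreal ((C + 1) / 2 * r^n))"
    by (intro suminf_le b summableI)
  also have "\<dots> < \<top>"
  proof -
    have "\<And>n. 0 \<le> (C + 1) / 2 * r^n" using C r by simp
    then have "(\<Sum>n. ennreal ((C + 1) / 2 * r^n)) \<noteq> \<top>" by (rule ennreal_suminf_neq_top[OF sg])
    then show ?thesis by (simp only: less_top[symmetric] not_False_eq_True)
  qed
  finally have fin: "(\<integral>\<^sup>+\<omega>. (\<Sum>n. ennreal \<bar>S (Suc n) \<omega> - S n \<omega>\<bar>) \<partial>M) \<noteq> \<top>" by (simp only: less_top)
  have "AE \<omega> in M. (\<Sum>n. ennreal \<bar>S (Suc n) \<omega> - S n \<omega>\<bar>) \<noteq> \<top>"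
  proof -
    have "(\<lambda>\<omega>. \<Sum>n. ennreal \<bar>S (Suc n) \<omega> - S n \<omega>\<bar>) \<in> borel_measurable M" by measurable
    note m = this
    have fin': "(\<integral>\<^sup>+\<omega>. (\<Sum>n. ennreal \<bar>S (Suc n) \<omega> - S n \<omega>\<bar>) \<partial>M) \<noteq> \<infinity>"
      using fin by simp
    have "AE \<omega> in M. (\<Sum>n. ennreal \<bar>S (Suc n) \<omega> - S n \<omega>\<bar>) \<noteq> \<infinity>"
      by (rule nn_integral_PInf_AE[OF m fin'])
    then show ?thesis by simp
  qed
  then show ?thesis
  proof (rule AE_mp, intro AE_I2 impI)
    fix \<omega> assume "(\<Sum>n. ennreal \<bar>S (Suc n) \<omega> - S n \<omega>\<bar>) \<noteq> \<top>"
    then have "summable (\<lambda>n. \<bar>S (Suc n) \<omega> - S n \<omega>\<bar>)"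
      by (intro summable_suminf_not_top) auto
    then have sm: "summable (\<lambda>n. S (Suc n) \<omega> - S n \<omega>)" by (rule summable_rabs_cancel)
    have eq: "(\<lambda>n. S n \<omega>) = (\<lambda>n. S 0 \<omega> + (\<Sum>k<n. S (Suc k) \<omega> - S k \<omega>))"
      using sum_lessThan_telescope[of "\<lambda>k. S k \<omega>"] by auto
    have "(\<lambda>n. S 0 \<omega> + (\<Sum>k<n. S (Suc k) \<omega> - S k \<omega>)) \<longlonglongrightarrow> S 0 \<omega> + (\<Sum>k. S (Suc k) \<omega> - S k \<omega>)"
      by (intro tendsto_add tendsto_const summable_LIMSEQ sm)
    then show "convergent (\<lambda>n. S n \<omega>)" unfolding eq convergent_def by blast
  qed
qed

lemma bm_meas: "brownian_motion M d W \<Longrightarrow> c \<in> {1..d} \<Longrightarrow> r \<in> {0..1} \<Longrightarrow> W c r \<in> borel_measurable M"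
  unfolding brownian_motion_def by blast

lemma bm_ps: "brownian_motion M d W \<Longrightarrow> prob_space M"
  unfolding brownian_motion_def by blast

lemma lvl2_meas:
  assumes bm: "brownian_motion M d W" and i: "i \<in> {1..d}" and j: "j \<in> {1..d}"
    and st: "0 \<le> s" "s \<le> t" "t \<le> 1"
  shows "(\<lambda>\<omega>. lvl2_sum strat W i j s t n \<omega>) \<in> borel_measurable M"
proof -
  have D: "\<And>k. k \<le> 2^n \<Longrightarrow> dyad s t n k \<in> {0..1}" using dyad_in[OF st(2)] st by force
  have Wi: "\<And>k. k \<le> 2^n \<Longrightarrow> W i (dyad s t n k) \<in> borel_measurable M" using bm_meas[OF bm i] D by blast
  have Wj: "\<And>k. k \<le> 2^n \<Longrightarrow> W j (dyad s t n k) \<in> borel_measurable M" using bm_meas[OF bm j] D by blast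
  have Wis: "W i s \<in> borel_measurable M" using Wi[of 0] by simp
  show ?thesis
  proof (cases strat)
    case True
    then show ?thesis unfolding lvl2_sum_def
      by (simp, intro borel_measurable_sum borel_measurable_times borel_measurable_diff borel_measurable_add
        borel_measurable_divide borel_measurable_const Wis Wi Wj) auto
  next
    case False
    then show ?thesis unfolding lvl2_sum_def
      by (simp, intro borel_measurable_sum borel_measurable_times borel_measurable_diff
        Wis Wi Wj) auto
  qed
qed

lemma sq_diff_le:
  fixes a b k d1 d2 :: real
  assumes "\<bar>a - k\<bar> \<le> d1" "\<bar>b - k\<bar> \<le> d2" "d1\<^sup>2 \<le> d1" "d2\<^sup>2 \<le> d2"
  shows "(a - b)\<^sup>2 \<le> 2 * d1 + 2 * d2"
proof -
  have "(a - b)\<^sup>2 \<le> 2 * (a - k)\<^sup>2 + 2 * (b - k)\<^sup>2"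
    using sum_squares_ge_zero[of "a - k + (b - k)" 0] by (simp add: power2_eq_square algebra_simps)
  also have "(a - k)\<^sup>2 \<le> d1\<^sup>2" using assms(1) by (metis abs_ge_zero power2_abs power_mono)
  also have "(b - k)\<^sup>2 \<le> d2\<^sup>2" using assms(2) by (metis abs_ge_zero power2_abs power_mono)
  finally show ?thesis using assms by linarith
qed

lemma DP_Suc: "DP s t n \<subseteq> DP s t (Suc n)"
proof
  fix x assume "x \<in> DP s t n"
  then obtain k where k: "k \<le> 2^n" "x = dyad s t n k" unfolding DP_def by auto
  have "x = dyad s t (Suc n) (2 * k)" using k by (simp add: dyad_def)
  moreover have "2 * k \<le> 2^Suc n" using k by simp
  ultimately show "x \<in> DP s t (Suc n)" by (simp add: DP_in)
qed

lemma lvl2_diff: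
  assumes bm: "brownian_motion M d W" and i: "i \<in> {1..d}" and j: "j \<in> {1..d}"
    and st: "0 \<le> s" "s < t" "t \<le> 1"
  shows "integrable M (\<lambda>\<omega>. (lvl2_sum strat W i j s t (Suc n) \<omega> - lvl2_sum strat W i j s t n \<omega>)\<^sup>2)"
    and "(\<integral>\<omega>. (lvl2_sum strat W i j s t (Suc n) \<omega> - lvl2_sum strat W i j s t n \<omega>)\<^sup>2 \<partial>M) \<le> 6 / 2^n"
proof -
  define G where "G = DP s t (Suc n)"
  have finG: "finite G" by (simp add: G_def DP_fin)
  have neG: "G \<noteq> {}" using DP_in[of 0 "Suc n" s t] by (auto simp: G_def)
  have G01: "G \<subseteq> {0..1}" unfolding G_def using DP_sub st by simp
  have D1: "DP s t (Suc n) \<subseteq> G" and D0: "DP s t n \<subseteq> G" using DP_Suc by (auto simp: G_def)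
  define K where "K = (\<lambda>m l. Kn strat s t (Suc n) G m l - Kn strat s t n G m l)"
  have eq: "\<And>\<omega>. lvl2_sum strat W i j s t (Suc n) \<omega> - lvl2_sum strat W i j s t n \<omega>
     = (\<Sum>m<gN G. \<Sum>l<gN G. K m l * incr W G i m \<omega> * incr W G j l \<omega>)"
    unfolding lvl2_repr[OF finG D1 less_imp_le[OF st(2)]] lvl2_repr[OF finG D0 less_imp_le[OF st(2)]] K_def
    by (simp add: sum_subtractf left_diff_distrib)
  show "integrable M (\<lambda>\<omega>. (lvl2_sum strat W i j s t (Suc n) \<omega> - lvl2_sum strat W i j s t n \<omega>)\<^sup>2)"
    unfolding eq by (rule bm_quad(1)[OF bm finG neG G01 i j])
  have tr: "(\<Sum>m<gN G. K m m * sg G m) = 0"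
    by (simp add: K_def Kn_kr kr_diag[OF st(2)])
  have pw: "(K m l)\<^sup>2 * sg G m * sg G l \<le>
       (2 * dr s t (Suc n) (grid G m) (grid G l) + 2 * dr s t n (grid G m) (grid G l)) * sg G m * sg G l"
    if ml: "m < gN G" "l < gN G" for m l
  proof -
    have "(K m l)\<^sup>2 \<le> 2 * dr s t (Suc n) (grid G m) (grid G l) + 2 * dr s t n (grid G m) (grid G l)"
      unfolding K_def Kn_kr
      by (rule sq_diff_le[OF kr_kid[OF st(2)] kr_kid[OF st(2)] dr_sq[OF st(2)] dr_sq[OF st(2)]])
    moreover have "0 \<le> sg G m * sg G l" using sg_pos[OF finG neG] ml by (simp add: less_imp_le)
    ultimately show "(K m l)\<^sup>2 * sg G m * sg G l \<le>
       (2 * dr s t (Suc n) (grid G m) (grid G l) + 2 * dr s t n (grid G m) (grid G l)) * sg G m * sg G l"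
      by (metis mult.assoc mult_right_mono)
  qed
  have "(\<Sum>m<gN G. \<Sum>l<gN G. (K m l)\<^sup>2 * sg G m * sg G l) \<le>
     (\<Sum>m<gN G. \<Sum>l<gN G. (2 * dr s t (Suc n) (grid G m) (grid G l) + 2 * dr s t n (grid G m) (grid G l)) * sg G m * sg G l)"
    using pw by (intro sum_mono) auto
  also have "\<dots> = 2 * (\<Sum>m<gN G. \<Sum>l<gN G. dr s t (Suc n) (grid G m) (grid G l) * sg G m * sg G l)
       + 2 * (\<Sum>m<gN G. \<Sum>l<gN G. dr s t n (grid G m) (grid G l) * sg G m * sg G l)"
    by (simp add: sum.distrib[symmetric] sum_distrib_left algebra_simps)
  also have "\<dots> = 2 * ((t - s)\<^sup>2 / 2^Suc n) + 2 * ((t - s)\<^sup>2 / 2^n)"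
    using sum_dr[OF finG neG st(2) D1] sum_dr[OF finG neG st(2) D0] by simp
  also have "\<dots> \<le> 3 / 2^n"
  proof -
    have "(t - s)\<^sup>2 \<le> 1" using st by (simp add: power_le_one)
    then show ?thesis by (simp add: field_simps)
  qed
  finally have S: "(\<Sum>m<gN G. \<Sum>l<gN G. (K m l)\<^sup>2 * sg G m * sg G l) \<le> 3 / 2^n" .
  show "(\<integral>\<omega>. (lvl2_sum strat W i j s t (Suc n) \<omega> - lvl2_sum strat W i j s t n \<omega>)\<^sup>2 \<partial>M) \<le> 6 / 2^n"
  proof -
    have "(if i = j then (\<Sum>m<gN G. K m m * sg G m) else 0)\<^sup>2 = 0" using tr by simp
    then show ?thesis unfolding eq using bm_quad(2)[OF bm finG neG G01 i j, of K] S by linarith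
  qed
qed

lemma lvl2_conv:
  assumes bm: "brownian_motion M d W" and i: "i \<in> {1..d}" and j: "j \<in> {1..d}"
    and st: "0 \<le> s" "s < t" "t \<le> 1"
  shows "AE \<omega> in M. convergent (\<lambda>n. lvl2_sum strat W i j s t n \<omega>)"
  by (rule as_conv_generic[OF bm_ps[OF bm] lvl2_meas[OF bm i j st(1) less_imp_le[OF st(2)] st(3)]
        lvl2_diff(1)[OF bm i j st] lvl2_diff(2)[OF bm i j st]]) simp

definition SS :: "real set \<Rightarrow> (real \<Rightarrow> real \<Rightarrow> real) \<Rightarrow> real" where
  "SS G f = (\<Sum>m<gN G. \<Sum>l<gN G. f (grid G m) (grid G l) * sg G m * sg G l)"

lemma SS_add: "SS G (\<lambda>x y. f x y + g x y) = SS G f + SS G g"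
  unfolding SS_def by (simp add: distrib_right sum.distrib)

lemma SS_cmult: "SS G (\<lambda>x y. c * f x y) = c * SS G f"
  unfolding SS_def by (simp add: sum_distrib_left mult_ac)

lemma SS_mono:
  assumes finG: "finite G" and neG: "G \<noteq> {}" and le: "\<And>x y. f x y \<le> g x y"
  shows "SS G f \<le> SS G g"
  unfolding SS_def
proof (intro sum_mono)
  fix m l assume "m \<in> {..<gN G}" "l \<in> {..<gN G}"
  then have "0 \<le> sg G m * sg G l" using sg_pos[OF finG neG] by (simp add: less_imp_le)
  then show "f (grid G m) (grid G l) * sg G m * sg G l \<le> g (grid G m) (grid G l) * sg G m * sg G l"
    using le by (metis mult.assoc mult_right_mono)
qed

lemma SS_rect:
  assumes finG: "finite G" and neG: "G \<noteq> {}"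
    and "a \<in> G" "b \<in> G" "a \<le> b" "c \<in> G" "e \<in> G" "c \<le> e"
  shows "SS G (\<lambda>x y. ind (a \<le> x \<and> x < b) * ind (c \<le> y \<and> y < e)) = (b - a) * (e - c)"
  unfolding SS_def using sum_ind_sg2[OF finG neG assms(3-)] by simp

lemma sq4: "((a::real) + b + c + d)\<^sup>2 \<le> 4 * (a\<^sup>2 + b\<^sup>2 + c\<^sup>2 + d\<^sup>2)"
proof -
  have "0 \<le> (a - b)\<^sup>2 + (a - c)\<^sup>2 + (a - d)\<^sup>2 + (b - c)\<^sup>2 + (b - d)\<^sup>2 + (c - d)\<^sup>2" by simp
  then show ?thesis by (simp add: power2_eq_square algebra_simps)
qed

lemma sq2: "((a::real) + b)\<^sup>2 \<le> 2 * (a\<^sup>2 + b\<^sup>2)"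
proof -
  have "0 \<le> (a - b)\<^sup>2" by simp
  then show ?thesis by (simp add: power2_eq_square algebra_simps)
qed

lemma kid_diff_sq:
  "(kid s t x y - kid s' t' x y)\<^sup>2 \<le>
     ind (min s s' \<le> x \<and> x < max s s') * ind (min s s' \<le> y \<and> y < max t t')
   + ind (min s s' \<le> x \<and> x < max t t') * ind (min t t' \<le> y \<and> y < max t t')"
  unfolding kid_def ind_def by (auto simp: min_def max_def)

lemma kid_sq: "(kid s t x y)\<^sup>2 \<le> ind (s \<le> x \<and> x < t) * ind (s \<le> y \<and> y < t)"
  unfolding kid_def ind_def by auto

lemma powr_ratio:
  fixes a b r :: real
  assumes "0 < a" "a \<le> b" "0 \<le> r" "r \<le> 1"
  shows "a / b \<le> (a / b) powr r"
proof -
  have "(a / b) powr 1 \<le> (a / b) powr r"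
    using assms by (intro powr_mono') auto
  then show ?thesis using assms by simp
qed

lemma powr_diff_pos:
  fixes a b r :: real
  assumes a: "0 < a" "a \<le> b" and r: "0 \<le> r" "r \<le> 1"
  shows "b powr r - a powr r \<le> b powr (r - 1) * (b - a)"
proof -
  have b: "0 < b" using a by simp
  have "a powr r = b powr r * (a / b) powr r" using a b by (simp add: powr_divide)
  also have "\<dots> \<ge> b powr r * (a / b)" using powr_ratio[OF a r] b by (intro mult_left_mono) auto
  finally have "b powr r - a powr r \<le> b powr r - b powr r * (a / b)" by simp
  also have "\<dots> = b powr r / b * (b - a)" using b by (simp add: field_simps)
  also have "b powr r / b = b powr (r - 1)" using b by (simp add: powr_diff)
  finally show ?thesis .
qed

lemma powr_diff_neg:
  fixes a b q :: real
  assumes a: "0 < a" "a \<le> b" and q: "0 \<le> q" "q \<le> 1"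
  shows "a powr (-q) - b powr (-q) \<le> a powr (-q) * (b - a) / b"
proof -
  have b: "0 < b" using a by simp
  have "b powr (-q) = a powr (-q) * (a / b) powr q" using a b
    by (simp add: powr_divide powr_minus field_simps)
  also have "\<dots> \<ge> a powr (-q) * (a / b)" using powr_ratio[OF a q] by (intro mult_left_mono) auto
  finally have "a powr (-q) - b powr (-q) \<le> a powr (-q) - a powr (-q) * (a / b)" by simp
  also have "\<dots> = a powr (-q) * (b - a) / b" using b by (simp add: field_simps)
  finally show ?thesis .
qed

lemma key_small:
  fixes m d q :: real
  assumes "0 < d" "d \<le> m" "0 \<le> q"
  shows "m powr (-2*q) * d\<^sup>2 \<le> d powr (2 - 2*q)"
proof -
  have "m powr (-2*q) \<le> d powr (-2*q)" using assms by (intro powr_mono2') auto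
  then have "m powr (-2*q) * d\<^sup>2 \<le> d powr (-2*q) * d\<^sup>2" by (intro mult_right_mono) auto
  also have "d powr (-2*q) * d\<^sup>2 = d powr (2 - 2*q)"
  proof -
    have "d\<^sup>2 = d powr 2" using assms powr_realpow[of d 2] by simp
    then show ?thesis by (simp add: powr_add[symmetric])
  qed
  finally show ?thesis .
qed

lemma bm_quad_SS:
  assumes bm: "brownian_motion M d W" and finG: "finite G" and neG: "G \<noteq> {}" and G01: "G \<subseteq> {0..1}"
    and i: "i \<in> {1..d}" and j: "j \<in> {1..d}"
  shows "integrable M (\<lambda>\<omega>. (\<Sum>m<gN G. \<Sum>l<gN G. F (grid G m) (grid G l) * incr W G i m \<omega> * incr W G j l \<omega>)\<^sup>2)"
    and "(\<integral>\<omega>. (\<Sum>m<gN G. \<Sum>l<gN G. F (grid G m) (grid G l) * incr W G i m \<omega> * incr W G j l \<omega>)\<^sup>2 \<partial>M) \<le>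
      (if i = j then (\<Sum>m<gN G. F (grid G m) (grid G m) * sg G m) else 0)\<^sup>2
      + 2 * SS G (\<lambda>x y. (F x y)\<^sup>2)"
  using bm_quad[OF bm finG neG G01 i j, of "\<lambda>m l. F (grid G m) (grid G l)"] unfolding SS_def by auto

lemma trace_kr:
  assumes finG: "finite G" and neG: "G \<noteq> {}" and st: "s < t" and DPG: "DP s t n \<subseteq> G"
  shows "(\<Sum>m<gN G. kr strat s t n (grid G m) (grid G m) * sg G m) = (if strat then 1/2 else 0) * (t - s)"
proof -
  have sG: "s \<in> G" and tG: "t \<in> G" using DPG DP_in[of 0 n s t] DP_in[of "2^n" n s t] by auto
  have "(\<Sum>m<gN G. kr strat s t n (grid G m) (grid G m) * sg G m)
      = (if strat then 1/2 else 0) * (\<Sum>m<gN G. ind (s \<le> grid G m \<and> grid G m < t) * sg G m)"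
    by (simp add: kr_diag[OF st] sum_distrib_left mult_ac)
  also have "\<dots> = (if strat then 1/2 else 0) * (t - s)"
    using sum_ind_sg[OF finG neG sG tG] st by simp
  finally show ?thesis .
qed

lemma SS_kr_sq:
  assumes finG: "finite G" and neG: "G \<noteq> {}" and st: "s < t" and DPG: "DP s t n \<subseteq> G"
  shows "SS G (\<lambda>x y. (kr strat s t n x y)\<^sup>2) \<le> (t - s)\<^sup>2"
proof -
  have sG: "s \<in> G" and tG: "t \<in> G" using DPG DP_in[of 0 n s t] DP_in[of "2^n" n s t] by auto
  have "SS G (\<lambda>x y. (kr strat s t n x y)\<^sup>2) \<le> SS G (\<lambda>x y. ind (s \<le> x \<and> x < t) * ind (s \<le> y \<and> y < t))"
    by (rule SS_mono[OF finG neG kr_sq[OF st]])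
  also have "\<dots> = (t - s)\<^sup>2" using SS_rect[OF finG neG sG tG _ sG tG] st by (simp add: power2_eq_square)
  finally show ?thesis .
qed

lemma single_pair:
  assumes bm: "brownian_motion M d W" and i: "i \<in> {1..d}" and j: "j \<in> {1..d}"
    and st: "0 \<le> s" "s < t" "t \<le> 1"
  shows "integrable M (\<lambda>\<omega>. (a * lvl2_sum strat W i j s t n \<omega>)\<^sup>2)"
    and "(\<integral>\<omega>. (a * lvl2_sum strat W i j s t n \<omega>)\<^sup>2 \<partial>M) \<le> 3 * a\<^sup>2 * (t - s)\<^sup>2"
proof -
  define G where "G = DP s t n"
  have finG: "finite G" by (simp add: G_def DP_fin)
  have neG: "G \<noteq> {}" using DP_in[of 0 n s t] by (auto simp: G_def)
  have G01: "G \<subseteq> {0..1}" unfolding G_def using DP_sub st by simp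
  have D: "DP s t n \<subseteq> G" by (simp add: G_def)
  define F where "F = (\<lambda>x y. a * kr strat s t n x y)"
  have eq: "\<And>\<omega>. a * lvl2_sum strat W i j s t n \<omega>
     = (\<Sum>m<gN G. \<Sum>l<gN G. F (grid G m) (grid G l) * incr W G i m \<omega> * incr W G j l \<omega>)"
    unfolding lvl2_repr[OF finG D less_imp_le[OF st(2)]] F_def Kn_kr
    by (simp add: sum_distrib_left mult_ac)
  show "integrable M (\<lambda>\<omega>. (a * lvl2_sum strat W i j s t n \<omega>)\<^sup>2)"
    unfolding eq by (rule bm_quad_SS(1)[OF bm finG neG G01 i j])
  have tr: "(\<Sum>m<gN G. F (grid G m) (grid G m) * sg G m) = a * ((if strat then 1/2 else 0) * (t - s))"
  proof -
    have "(\<Sum>m<gN G. F (grid G m) (grid G m) * sg G m) = a * (\<Sum>m<gN G. kr strat s t n (grid G m) (grid G m) * sg G m)"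
      by (simp add: F_def sum_distrib_left mult.assoc)
    also have "\<dots> = a * ((if strat then 1/2 else 0) * (t - s))"
      by (simp only: trace_kr[OF finG neG st(2) D, of strat])
    finally show ?thesis .
  qed
  have tr2: "(if i = j then (\<Sum>m<gN G. F (grid G m) (grid G m) * sg G m) else 0)\<^sup>2 \<le> a\<^sup>2 * (t - s)\<^sup>2"
  proof -
    have "((if strat then 1/2 else 0) * (t - s))\<^sup>2 \<le> (t - s)\<^sup>2"
      by (auto simp: power2_eq_square mult_left_le_one_le)
    then have "(a * ((if strat then 1/2 else 0) * (t - s)))\<^sup>2 \<le> a\<^sup>2 * (t - s)\<^sup>2"
      by (simp add: power_mult_distrib mult_left_mono)
    then show ?thesis using tr by auto
  qed
  have ss: "SS G (\<lambda>x y. (F x y)\<^sup>2) \<le> a\<^sup>2 * (t - s)\<^sup>2"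
  proof -
    have "SS G (\<lambda>x y. (F x y)\<^sup>2) = a\<^sup>2 * SS G (\<lambda>x y. (kr strat s t n x y)\<^sup>2)"
      unfolding F_def power_mult_distrib by (rule SS_cmult)
    also have "\<dots> \<le> a\<^sup>2 * (t - s)\<^sup>2" by (intro mult_left_mono SS_kr_sq[OF finG neG st(2) D]) auto
    finally show ?thesis .
  qed
  show "(\<integral>\<omega>. (a * lvl2_sum strat W i j s t n \<omega>)\<^sup>2 \<partial>M) \<le> 3 * a\<^sup>2 * (t - s)\<^sup>2"
    unfolding eq using bm_quad_SS(2)[OF bm finG neG G01 i j, of F] tr2 ss by linarith
qed

lemma SS_dr:
  assumes finG: "finite G" and neG: "G \<noteq> {}" and st: "s < t" and DPG: "DP s t n \<subseteq> G"
  shows "SS G (\<lambda>x y. dr s t n x y) = (t - s)\<^sup>2 / 2^n"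
  unfolding SS_def by (rule sum_dr[OF finG neG st DPG])

lemma lin6:
  fixes E T S A B :: real
  assumes "E \<le> T + 2 * S" "S \<le> 2 * A + 2 * B" "T \<le> 2 * (A + B)"
  shows "E \<le> 6 * (A + B)"
  using assms[unfolded distrib_left] unfolding distrib_left by linarith

lemma lin8:
  fixes E T S X :: real
  assumes "E \<le> T + 2 * S" "S \<le> 4 * X"
  shows "E \<le> T + 8 * X"
  using assms by linarith

lemma two_pairs:
  assumes bm: "brownian_motion M d W" and i: "i \<in> {1..d}" and j: "j \<in> {1..d}"
    and st: "0 \<le> s" "s < t" "t \<le> 1" and st': "0 \<le> s'" "s' < t'" "t' \<le> 1"
  shows "integrable M (\<lambda>\<omega>. (a * lvl2_sum strat W i j s t n \<omega> - b * lvl2_sum strat W i j s' t' n \<omega>)\<^sup>2)"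
    and "(\<integral>\<omega>. (a * lvl2_sum strat W i j s t n \<omega> - b * lvl2_sum strat W i j s' t' n \<omega>)\<^sup>2 \<partial>M)
          \<le> 6 * (a\<^sup>2 * (t - s)\<^sup>2 + b\<^sup>2 * (t' - s')\<^sup>2)"
    and "(\<integral>\<omega>. (a * lvl2_sum strat W i j s t n \<omega> - b * lvl2_sum strat W i j s' t' n \<omega>)\<^sup>2 \<partial>M)
          \<le> (a * (t - s) - b * (t' - s'))\<^sup>2 + 8 * (a\<^sup>2 * ((t - s)\<^sup>2 / 2^n) + b\<^sup>2 * ((t' - s')\<^sup>2 / 2^n)
              + a\<^sup>2 * ((\<bar>s - s'\<bar> + \<bar>t - t'\<bar>) * (max t t' - min s s')) + (a - b)\<^sup>2 * (t' - s')\<^sup>2)"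
proof -
  define G where "G = DP s t n \<union> DP s' t' n"
  have finG: "finite G" by (simp add: G_def DP_fin)
  have neG: "G \<noteq> {}" using DP_in[of 0 n s t] by (auto simp: G_def)
  have G01: "G \<subseteq> {0..1}" unfolding G_def using DP_sub st st' by simp
  have D: "DP s t n \<subseteq> G" and D': "DP s' t' n \<subseteq> G" by (auto simp: G_def)
  have sG: "s \<in> G" and tG: "t \<in> G" using D DP_in[of 0 n s t] DP_in[of "2^n" n s t] by auto
  have sG': "s' \<in> G" and tG': "t' \<in> G" using D' DP_in[of 0 n s' t'] DP_in[of "2^n" n s' t'] by auto
  define c where "c = (if strat then 1/2 else 0 :: real)"
  define F where "F = (\<lambda>x y. a * kr strat s t n x y - b * kr strat s' t' n x y)"
  have eq: "\<And>\<omega>. a * lvl2_sum strat W i j s t n \<omega> - b * lvl2_sum strat W i j s' t' n \<omega>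
     = (\<Sum>m<gN G. \<Sum>l<gN G. F (grid G m) (grid G l) * incr W G i m \<omega> * incr W G j l \<omega>)"
    unfolding lvl2_repr[OF finG D less_imp_le[OF st(2)]] lvl2_repr[OF finG D' less_imp_le[OF st'(2)]] F_def Kn_kr
    by (simp add: sum_distrib_left sum_subtractf left_diff_distrib right_diff_distrib mult_ac)
  show "integrable M (\<lambda>\<omega>. (a * lvl2_sum strat W i j s t n \<omega> - b * lvl2_sum strat W i j s' t' n \<omega>)\<^sup>2)"
    unfolding eq by (rule bm_quad_SS(1)[OF bm finG neG G01 i j])
  have tr: "(\<Sum>m<gN G. F (grid G m) (grid G m) * sg G m) = c * (a * (t - s) - b * (t' - s'))"
  proof -
    have "(\<Sum>m<gN G. F (grid G m) (grid G m) * sg G m) =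
       a * (\<Sum>m<gN G. kr strat s t n (grid G m) (grid G m) * sg G m)
       - b * (\<Sum>m<gN G. kr strat s' t' n (grid G m) (grid G m) * sg G m)"
      by (simp add: F_def sum_distrib_left sum_subtractf left_diff_distrib mult.assoc)
    also have "\<dots> = a * (c * (t - s)) - b * (c * (t' - s'))"
      by (simp only: trace_kr[OF finG neG st(2) D, of strat] trace_kr[OF finG neG st'(2) D', of strat] c_def)
    finally show ?thesis by (simp add: algebra_simps)
  qed
  have tr2: "(if i = j then (\<Sum>m<gN G. F (grid G m) (grid G m) * sg G m) else 0)\<^sup>2 \<le> (a * (t - s) - b * (t' - s'))\<^sup>2"
  proof -
    have c: "c\<^sup>2 \<le> 1" by (simp add: c_def power2_eq_square)
    have "(c * (a * (t - s) - b * (t' - s')))\<^sup>2 \<le> (a * (t - s) - b * (t' - s'))\<^sup>2"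
      unfolding power_mult_distrib using mult_right_mono[OF c, of "(a * (t - s) - b * (t' - s'))\<^sup>2"] by simp
    then show ?thesis using tr by auto
  qed
  have E: "(\<integral>\<omega>. (a * lvl2_sum strat W i j s t n \<omega> - b * lvl2_sum strat W i j s' t' n \<omega>)\<^sup>2 \<partial>M) \<le>
      (a * (t - s) - b * (t' - s'))\<^sup>2 + 2 * SS G (\<lambda>x y. (F x y)\<^sup>2)"
    unfolding eq using bm_quad_SS(2)[OF bm finG neG G01 i j, of F] tr2 by linarith
  have "SS G (\<lambda>x y. (F x y)\<^sup>2) \<le> SS G (\<lambda>x y. 2 * a\<^sup>2 * (kr strat s t n x y)\<^sup>2 + 2 * b\<^sup>2 * (kr strat s' t' n x y)\<^sup>2)"
    unfolding F_def
  proof (rule SS_mono[OF finG neG])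
    fix x y
    show "(a * kr strat s t n x y - b * kr strat s' t' n x y)\<^sup>2 \<le> 2 * a\<^sup>2 * (kr strat s t n x y)\<^sup>2 + 2 * b\<^sup>2 * (kr strat s' t' n x y)\<^sup>2"
      using sq2[of "a * kr strat s t n x y" "- b * kr strat s' t' n x y"] by (simp add: power_mult_distrib)
  qed
  also have "\<dots> = 2 * a\<^sup>2 * SS G (\<lambda>x y. (kr strat s t n x y)\<^sup>2) + 2 * b\<^sup>2 * SS G (\<lambda>x y. (kr strat s' t' n x y)\<^sup>2)"
    by (simp only: SS_add SS_cmult)
  also have "\<dots> \<le> 2 * a\<^sup>2 * (t - s)\<^sup>2 + 2 * b\<^sup>2 * (t' - s')\<^sup>2"
    by (intro add_mono mult_left_mono SS_kr_sq[OF finG neG st(2) D] SS_kr_sq[OF finG neG st'(2) D']) auto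
  finally have L: "SS G (\<lambda>x y. (F x y)\<^sup>2) \<le> 2 * a\<^sup>2 * (t - s)\<^sup>2 + 2 * b\<^sup>2 * (t' - s')\<^sup>2" .
  have "(a * (t - s) - b * (t' - s'))\<^sup>2 \<le> 2 * (a\<^sup>2 * (t - s)\<^sup>2 + b\<^sup>2 * (t' - s')\<^sup>2)"
    using sq2[of "a * (t - s)" "- b * (t' - s')"] by (simp add: power_mult_distrib)
  then show "(\<integral>\<omega>. (a * lvl2_sum strat W i j s t n \<omega> - b * lvl2_sum strat W i j s' t' n \<omega>)\<^sup>2 \<partial>M)
          \<le> 6 * (a\<^sup>2 * (t - s)\<^sup>2 + b\<^sup>2 * (t' - s')\<^sup>2)"
  proof -
    have L2: "SS G (\<lambda>x y. (F x y)\<^sup>2) \<le> 2 * (a\<^sup>2 * (t - s)\<^sup>2) + 2 * (b\<^sup>2 * (t' - s')\<^sup>2)"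
      using L by (simp add: mult.assoc)
    show ?thesis by (rule lin6[OF E L2 \<open>(a * (t - s) - b * (t' - s'))\<^sup>2 \<le> 2 * (a\<^sup>2 * (t - s)\<^sup>2 + b\<^sup>2 * (t' - s')\<^sup>2)\<close>])
  qed
  define Bd where "Bd = (\<lambda>x y. ind (min s s' \<le> x \<and> x < max s s') * ind (min s s' \<le> y \<and> y < max t t')
   + ind (min s s' \<le> x \<and> x < max t t') * ind (min t t' \<le> y \<and> y < max t t'))"
  have pw: "(F x y)\<^sup>2 \<le> 4 * (a\<^sup>2 * dr s t n x y + b\<^sup>2 * dr s' t' n x y + a\<^sup>2 * Bd x y
       + (a - b)\<^sup>2 * (ind (s' \<le> x \<and> x < t') * ind (s' \<le> y \<and> y < t')))" for x y
  proof -
    have "F x y = a * (kr strat s t n x y - kid s t x y) + (- b) * (kr strat s' t' n x y - kid s' t' x y)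
        + a * (kid s t x y - kid s' t' x y) + (a - b) * kid s' t' x y"
      by (simp add: F_def algebra_simps)
    then have "(F x y)\<^sup>2 \<le> 4 * ((a * (kr strat s t n x y - kid s t x y))\<^sup>2 + ((- b) * (kr strat s' t' n x y - kid s' t' x y))\<^sup>2
        + (a * (kid s t x y - kid s' t' x y))\<^sup>2 + ((a - b) * kid s' t' x y)\<^sup>2)"
      using sq4 by metis
    also have "\<dots> \<le> 4 * (a\<^sup>2 * dr s t n x y + b\<^sup>2 * dr s' t' n x y + a\<^sup>2 * Bd x y
       + (a - b)\<^sup>2 * (ind (s' \<le> x \<and> x < t') * ind (s' \<le> y \<and> y < t')))"
    proof -
      have d1: "(kr strat s t n x y - kid s t x y)\<^sup>2 \<le> dr s t n x y"
        using kr_kid[OF st(2), of strat n x y] dr_sq[OF st(2), of n x y]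
        by (metis abs_ge_zero order_trans power2_abs power_mono)
      have d2: "(kr strat s' t' n x y - kid s' t' x y)\<^sup>2 \<le> dr s' t' n x y"
        using kr_kid[OF st'(2), of strat n x y] dr_sq[OF st'(2), of n x y]
        by (metis abs_ge_zero order_trans power2_abs power_mono)
      have d3: "(kid s t x y - kid s' t' x y)\<^sup>2 \<le> Bd x y" unfolding Bd_def by (rule kid_diff_sq)
      have d4: "(kid s' t' x y)\<^sup>2 \<le> ind (s' \<le> x \<and> x < t') * ind (s' \<le> y \<and> y < t')" by (rule kid_sq)
      show ?thesis unfolding power_mult_distrib
        using mult_left_mono[OF d1, of "a\<^sup>2"] mult_left_mono[OF d2, of "(-b)\<^sup>2"]
          mult_left_mono[OF d3, of "a\<^sup>2"] mult_left_mono[OF d4, of "(a-b)\<^sup>2"] by simp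
    qed
    finally show ?thesis .
  qed
  have mG: "min s s' \<in> G" "max s s' \<in> G" "min t t' \<in> G" "max t t' \<in> G"
    using sG sG' tG tG' by (auto simp: min_def max_def)
  have "SS G (\<lambda>x y. (F x y)\<^sup>2) \<le> SS G (\<lambda>x y. 4 * (a\<^sup>2 * dr s t n x y + b\<^sup>2 * dr s' t' n x y + a\<^sup>2 * Bd x y
       + (a - b)\<^sup>2 * (ind (s' \<le> x \<and> x < t') * ind (s' \<le> y \<and> y < t'))))"
    by (rule SS_mono[OF finG neG pw])
  also have "\<dots> = 4 * (a\<^sup>2 * SS G (dr s t n) + b\<^sup>2 * SS G (dr s' t' n) + a\<^sup>2 * SS G Bd
       + (a - b)\<^sup>2 * SS G (\<lambda>x y. ind (s' \<le> x \<and> x < t') * ind (s' \<le> y \<and> y < t')))"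
    by (simp only: SS_add SS_cmult)
  also have "SS G (dr s t n) = (t - s)\<^sup>2 / 2^n" using SS_dr[OF finG neG st(2) D] by simp
  also have "SS G (dr s' t' n) = (t' - s')\<^sup>2 / 2^n" using SS_dr[OF finG neG st'(2) D'] by simp
  also have "SS G (\<lambda>x y. ind (s' \<le> x \<and> x < t') * ind (s' \<le> y \<and> y < t')) = (t' - s')\<^sup>2"
    using SS_rect[OF finG neG sG' tG' _ sG' tG'] st' by (simp add: power2_eq_square)
  also have "SS G Bd = (\<bar>s - s'\<bar> + \<bar>t - t'\<bar>) * (max t t' - min s s')"
  proof -
    have "SS G Bd = (max s s' - min s s') * (max t t' - min s s') + (max t t' - min s s') * (max t t' - min t t')"
      unfolding Bd_def SS_add
      using SS_rect[OF finG neG mG(1) mG(2) _ mG(1) mG(4)] SS_rect[OF finG neG mG(1) mG(4) _ mG(3) mG(4)]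
        st st' by (simp add: min_def max_def)
    also have "\<dots> = (\<bar>s - s'\<bar> + \<bar>t - t'\<bar>) * (max t t' - min s s')"
      by (simp add: min_def max_def abs_if algebra_simps)
    finally show ?thesis .
  qed
  finally have Sm: "SS G (\<lambda>x y. (F x y)\<^sup>2) \<le> 4 * (a\<^sup>2 * ((t - s)\<^sup>2 / 2^n) + b\<^sup>2 * ((t' - s')\<^sup>2 / 2^n)
      + a\<^sup>2 * ((\<bar>s - s'\<bar> + \<bar>t - t'\<bar>) * (max t t' - min s s')) + (a - b)\<^sup>2 * (t' - s')\<^sup>2)" .
  show "(\<integral>\<omega>. (a * lvl2_sum strat W i j s t n \<omega> - b * lvl2_sum strat W i j s' t' n \<omega>)\<^sup>2 \<partial>M)
          \<le> (a * (t - s) - b * (t' - s'))\<^sup>2 + 8 * (a\<^sup>2 * ((t - s)\<^sup>2 / 2^n) + b\<^sup>2 * ((t' - s')\<^sup>2 / 2^n)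
              + a\<^sup>2 * ((\<bar>s - s'\<bar> + \<bar>t - t'\<bar>) * (max t t' - min s s')) + (a - b)\<^sup>2 * (t' - s')\<^sup>2)"
    by (rule lin8[OF E Sm])
qed

lemma powr_sq_neg: "0 < (a::real) \<Longrightarrow> (a powr (-q))\<^sup>2 = a powr (-2*q)"
proof -
  assume a: "0 < a"
  have "(a powr (-q))\<^sup>2 = a powr (-q + -q)" unfolding power2_eq_square by (rule powr_add[symmetric])
  also have "-q + -q = -2*q" by simp
  finally show ?thesis .
qed

lemma subA:
  fixes a b d q :: real
  assumes a: "0 < a" "a \<le> b" and bd: "b - a \<le> d" and da: "d \<le> a" and d: "0 < d" and q: "0 \<le> q" "q \<le> 1"
  shows "(b powr (1 - q) - a powr (1 - q))\<^sup>2 \<le> d powr (2 - 2*q)"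
proof -
  have b: "0 < b" using a by simp
  have nn: "0 \<le> b powr (1 - q) - a powr (1 - q)" using a q by (simp add: powr_mono2)
  have "b powr (1 - q) - a powr (1 - q) \<le> b powr (1 - q - 1) * (b - a)"
    using powr_diff_pos[OF a, of "1 - q"] q by simp
  also have "\<dots> \<le> a powr (-q) * d"
  proof (rule mult_mono)
    show "b powr (1 - q - 1) \<le> a powr (-q)" using a q by (simp add: powr_mono2')
  qed (use bd a in auto)
  finally have "(b powr (1 - q) - a powr (1 - q))\<^sup>2 \<le> (a powr (-q) * d)\<^sup>2"
    using nn by (simp add: power_mono)
  also have "\<dots> = a powr (-2*q) * d\<^sup>2" using a by (simp add: power_mult_distrib powr_sq_neg)
  also have "\<dots> \<le> d powr (2 - 2*q)" using key_small[OF d da q(1)] .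
  finally show ?thesis .
qed

lemma subB:
  fixes a b d q h :: real
  assumes a: "0 < a" "a \<le> b" and bd: "b - a \<le> d" and da: "d \<le> a" and d: "0 < d" and q: "0 \<le> q" "q \<le> 1"
    and h: "0 \<le> h" "h \<le> b"
  shows "(a powr (-q) - b powr (-q))\<^sup>2 * h\<^sup>2 \<le> d powr (2 - 2*q)"
proof -
  have b: "0 < b" using a by simp
  have nn: "0 \<le> a powr (-q) - b powr (-q)" using a q by (simp add: powr_mono2')
  have "a powr (-q) - b powr (-q) \<le> a powr (-q) * (b - a) / b" by (rule powr_diff_neg[OF a q])
  then have "(a powr (-q) - b powr (-q))\<^sup>2 \<le> (a powr (-q) * (b - a) / b)\<^sup>2" using nn by (simp add: power_mono)
  moreover have "h\<^sup>2 \<le> b\<^sup>2" using h by (intro power_mono) auto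
  ultimately have "(a powr (-q) - b powr (-q))\<^sup>2 * h\<^sup>2 \<le> (a powr (-q) * (b - a) / b)\<^sup>2 * b\<^sup>2"
    by (intro mult_mono) auto
  also have "\<dots> = (a powr (-q))\<^sup>2 * (b - a)\<^sup>2" using b by (simp add: power_mult_distrib power_divide)
  also have "\<dots> = a powr (-2*q) * (b - a)\<^sup>2" using a by (simp add: powr_sq_neg)
  also have "\<dots> \<le> a powr (-2*q) * d\<^sup>2" using a bd by (intro mult_left_mono power_mono) auto
  also have "\<dots> \<le> d powr (2 - 2*q)" using key_small[OF d da q(1)] .
  finally show ?thesis .
qed

lemma subC:
  fixes h d q :: real
  assumes d: "0 < d" "d \<le> h" and q: "1/2 \<le> q"
  shows "(h powr (-q))\<^sup>2 * (d * (h + d)) \<le> 2 * d powr (2 - 2*q)"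
proof -
  have h: "0 < h" using d by simp
  have e1: "h * h powr (-2*q) = h powr (1 - 2*q)" using h powr_mult_base[of h "-2*q"] by simp
  have e2: "d * d powr (1 - 2*q) = d powr (2 - 2*q)" using d powr_mult_base[of d "1 - 2*q"] by simp
  have m: "h powr (1 - 2*q) \<le> d powr (1 - 2*q)" using d q by (intro powr_mono2') auto
  have "(h powr (-q))\<^sup>2 * (d * (h + d)) \<le> h powr (-2*q) * (d * (2 * h))"
    using d h by (simp add: powr_sq_neg mult_left_mono)
  also have "\<dots> = 2 * d * (h * h powr (-2*q))" by (simp add: mult_ac)
  also have "\<dots> = 2 * d * h powr (1 - 2*q)" by (simp only: e1)
  also have "\<dots> \<le> 2 * d * d powr (1 - 2*q)" using d m by (intro mult_left_mono) auto
  also have "\<dots> = 2 * (d * d powr (1 - 2*q))" by simp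
  also have "\<dots> = 2 * d powr (2 - 2*q)" by (simp only: e2)
  finally show ?thesis .
qed

lemma large_pow:
  fixes h d g :: real
  assumes h: "0 < h" "h \<le> 5 * d" and g: "0 \<le> g" "g \<le> 2"
  shows "h powr g \<le> 25 * d powr g"
proof -
  have d: "0 < d" using h by simp
  have "h powr g \<le> (5 * d) powr g" using h g by (intro powr_mono2) auto
  also have "\<dots> = 5 powr g * d powr g" using d by (simp add: powr_mult)
  also have "5 powr g \<le> 5 powr 2" using g by (intro powr_mono) auto
  also have "(5::real) powr 2 = 25" by (simp add: powr_numeral)
  finally show ?thesis using d by (simp add: mult_right_mono)
qed

lemma ah_eq: "0 < (h::real) \<Longrightarrow> (h powr (-q))\<^sup>2 * h\<^sup>2 = h powr (2 - 2*q)"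
proof -
  assume h: "0 < h"
  have "h\<^sup>2 = h powr 2" using h powr_realpow[of h 2] by simp
  then have "(h powr (-q))\<^sup>2 * h\<^sup>2 = h powr (-2*q) * h powr 2" using h by (simp add: powr_sq_neg)
  also have "\<dots> = h powr (-2*q + 2)" by (rule powr_add[symmetric])
  finally show ?thesis by simp
qed

lemma ah_eq1: "0 < (h::real) \<Longrightarrow> h powr (-q) * h = h powr (1 - q)"
  by (simp add: powr_mult_base mult.commute)

lemma fatou_bound:
  fixes f :: "nat \<Rightarrow> 'a \<Rightarrow> real" and F :: "'a \<Rightarrow> real"
  assumes meas: "\<And>n. f n \<in> borel_measurable M"
    and lim: "AE \<omega> in M. (\<lambda>n. f n \<omega>) \<longlonglongrightarrow> F \<omega>"
    and int: "\<And>n. integrable M (\<lambda>\<omega>. (f n \<omega>)\<^sup>2)"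
    and bnd: "\<And>n. (\<integral>\<omega>. (f n \<omega>)\<^sup>2 \<partial>M) \<le> B + R / 2^n"
  shows "(\<integral>\<^sup>+\<omega>. ennreal ((F \<omega>)\<^sup>2) \<partial>M) \<le> ennreal B"
proof -
  have [measurable]: "\<And>n. f n \<in> borel_measurable M" by (rule meas)
  have "(\<integral>\<^sup>+\<omega>. ennreal ((F \<omega>)\<^sup>2) \<partial>M) = (\<integral>\<^sup>+\<omega>. liminf (\<lambda>n. ennreal ((f n \<omega>)\<^sup>2)) \<partial>M)"
  proof (rule nn_integral_cong_AE)
    show "AE \<omega> in M. ennreal ((F \<omega>)\<^sup>2) = liminf (\<lambda>n. ennreal ((f n \<omega>)\<^sup>2))"
      using lim
    proof (rule AE_mp, intro AE_I2 impI)
      fix \<omega> assume "(\<lambda>n. f n \<omega>) \<longlonglongrightarrow> F \<omega>"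
      then have "(\<lambda>n. ennreal ((f n \<omega>)\<^sup>2)) \<longlonglongrightarrow> ennreal ((F \<omega>)\<^sup>2)"
        by (intro tendsto_ennrealI tendsto_power)
      then have "liminf (\<lambda>n. ennreal ((f n \<omega>)\<^sup>2)) = ennreal ((F \<omega>)\<^sup>2)"
        by (rule lim_imp_Liminf[OF trivial_limit_sequentially])
      then show "ennreal ((F \<omega>)\<^sup>2) = liminf (\<lambda>n. ennreal ((f n \<omega>)\<^sup>2))" by simp
    qed
  qed
  also have "\<dots> \<le> liminf (\<lambda>n. \<integral>\<^sup>+\<omega>. ennreal ((f n \<omega>)\<^sup>2) \<partial>M)"
    by (rule nn_integral_liminf) measurable
  also have "\<dots> = liminf (\<lambda>n. ennreal (\<integral>\<omega>. (f n \<omega>)\<^sup>2 \<partial>M))"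
    using int by (simp add: nn_integral_eq_integral)
  also have "\<dots> \<le> liminf (\<lambda>n. ennreal (B + R / 2^n))"
    by (intro Liminf_mono always_eventually allI ennreal_leI bnd)
  also have "\<dots> = ennreal B"
  proof -
    have "(\<lambda>n. R * (1/2)^n) \<longlonglongrightarrow> R * 0"
      by (intro tendsto_mult tendsto_const LIMSEQ_power_zero) simp
    moreover have "(\<lambda>n. R * (1/2)^n) = (\<lambda>n. R / 2^n)" by (simp add: power_one_over)
    ultimately have "(\<lambda>n. R / 2^n) \<longlonglongrightarrow> 0" by simp
    then have "(\<lambda>n. B + R / 2^n) \<longlonglongrightarrow> B + 0"
      by (intro tendsto_add tendsto_const)
    then have "(\<lambda>n. ennreal (B + R / 2^n)) \<longlonglongrightarrow> ennreal B"
      by (intro tendsto_ennrealI) simp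
    then show ?thesis by (rule lim_imp_Liminf[OF trivial_limit_sequentially])
  qed
  finally show ?thesis .
qed

lemma case_both:
  fixes q :: real
  assumes q: "1/2 \<le> q" "q \<le> 1"
    and bm: "brownian_motion M d W" and i: "i \<in> {1..d}" and j: "j \<in> {1..d}"
    and st: "0 \<le> s" "s < t" "t \<le> 1" and st': "0 \<le> s'" "s' < t'" "t' \<le> 1"
    and dl: "dl = \<bar>s' - s\<bar> + \<bar>t' - t\<bar>" and dpos: "0 < dl"
  defines "a \<equiv> (t - s) powr (-q)" and "b \<equiv> (t' - s') powr (-q)"
  shows "integrable M (\<lambda>\<omega>. (a * lvl2_sum strat W i j s t n \<omega> - b * lvl2_sum strat W i j s' t' n \<omega>)\<^sup>2)"
    and "(\<integral>\<omega>. (a * lvl2_sum strat W i j s t n \<omega> - b * lvl2_sum strat W i j s' t' n \<omega>)\<^sup>2 \<partial>M)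
          \<le> 300 * dl powr (2 - 2*q) + 8 * (a\<^sup>2 * (t - s)\<^sup>2 + b\<^sup>2 * (t' - s')\<^sup>2) / 2^n"
proof -
  show "integrable M (\<lambda>\<omega>. (a * lvl2_sum strat W i j s t n \<omega> - b * lvl2_sum strat W i j s' t' n \<omega>)\<^sup>2)"
    by (rule two_pairs(1)[OF bm i j st st'])
  define h where "h = t - s"
  define h' where "h' = t' - s'"
  have h: "0 < h" "0 < h'" using st st' by (auto simp: h_def h'_def)
  have hh: "\<bar>h - h'\<bar> \<le> dl" unfolding dl h_def h'_def by linarith
  have ah: "a\<^sup>2 * h\<^sup>2 = h powr (2 - 2*q)" unfolding a_def h_def[symmetric] by (rule ah_eq[OF h(1)])
  have bh: "b\<^sup>2 * h'\<^sup>2 = h' powr (2 - 2*q)" unfolding b_def h'_def[symmetric] by (rule ah_eq[OF h(2)])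
  define R where "R = 8 * (a\<^sup>2 * (t - s)\<^sup>2 + b\<^sup>2 * (t' - s')\<^sup>2)"
  have R: "0 \<le> R" by (simp add: R_def)
  have R2: "0 \<le> R / 2^n" using R by simp
  define E where "E = (\<integral>\<omega>. (a * lvl2_sum strat W i j s t n \<omega> - b * lvl2_sum strat W i j s' t' n \<omega>)\<^sup>2 \<partial>M)"
  have g: "0 \<le> 2 - 2*q" "2 - 2*q \<le> 2" using q by auto
  have "E \<le> 300 * dl powr (2 - 2*q) + R / 2^n"
  proof (cases "min h h' \<le> 4 * dl")
    case True
    have h5: "h \<le> 5 * dl" "h' \<le> 5 * dl" using True hh by (auto simp: min_def abs_if split: if_splits)
    have "E \<le> 6 * (a\<^sup>2 * (t - s)\<^sup>2 + b\<^sup>2 * (t' - s')\<^sup>2)"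
      unfolding E_def by (rule two_pairs(2)[OF bm i j st st'])
    also have "\<dots> = 6 * (h powr (2 - 2*q) + h' powr (2 - 2*q))"
      using ah bh by (simp add: h_def h'_def)
    also have "\<dots> \<le> 6 * (25 * dl powr (2 - 2*q) + 25 * dl powr (2 - 2*q))"
      using large_pow[OF h(1) h5(1) g] large_pow[OF h(2) h5(2) g] by simp
    also have "\<dots> = 300 * dl powr (2 - 2*q)" by simp
    finally show ?thesis using R2 by simp
  next
    case False
    then have small: "4 * dl < h" "4 * dl < h'" by auto
    have T1: "(a * (t - s) - b * (t' - s'))\<^sup>2 \<le> dl powr (2 - 2*q)"
    proof -
      have e: "a * (t - s) = h powr (1 - q)" "b * (t' - s') = h' powr (1 - q)"
        unfolding a_def b_def h_def[symmetric] h'_def[symmetric] using ah_eq1 h by auto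
      show ?thesis
      proof (cases "h \<le> h'")
        case True
        show ?thesis unfolding e using subA[OF h(1) True _ _ dpos, of q] hh small q
          by (simp add: power2_commute)
      next
        case False
        show ?thesis unfolding e using subA[OF h(2) _ _ _ dpos, of h q] False hh small q by simp
      qed
    qed
    have T3: "a\<^sup>2 * ((\<bar>s - s'\<bar> + \<bar>t - t'\<bar>) * (max t t' - min s s')) \<le> 2 * dl powr (2 - 2*q)"
    proof -
      have e: "\<bar>s - s'\<bar> + \<bar>t - t'\<bar> = dl" unfolding dl by (simp add: abs_minus_commute)
      have m: "max t t' - min s s' \<le> h + dl" unfolding dl h_def by (auto simp: max_def min_def)
      have "a\<^sup>2 * ((\<bar>s - s'\<bar> + \<bar>t - t'\<bar>) * (max t t' - min s s')) \<le> a\<^sup>2 * (dl * (h + dl))"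
        unfolding e using m dpos by (intro mult_left_mono) auto
      also have "\<dots> \<le> 2 * dl powr (2 - 2*q)"
      proof -
        have "dl \<le> h" using small dpos by linarith
        then show ?thesis unfolding a_def h_def[symmetric] by (rule subC[OF dpos _ q(1)])
      qed
      finally show ?thesis .
    qed
    have T4: "(a - b)\<^sup>2 * (t' - s')\<^sup>2 \<le> dl powr (2 - 2*q)"
    proof -
      have q0: "0 \<le> q" using q by linarith
      have dh: "dl \<le> h" "dl \<le> h'" using small dpos by linarith+
      show ?thesis
      proof (cases "h \<le> h'")
        case True
        have bd: "h' - h \<le> dl" using hh by linarith
        show ?thesis unfolding a_def b_def h_def[symmetric] h'_def[symmetric]
          by (rule subB[OF h(1) True bd dh(1) dpos q0 q(2) less_imp_le[OF h(2)] order_refl])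
      next
        case False
        have le: "h' \<le> h" using False by linarith
        have bd: "h - h' \<le> dl" using hh by linarith
        have "(a - b)\<^sup>2 = (b - a)\<^sup>2" by (simp add: power2_commute)
        then show ?thesis unfolding a_def b_def h_def[symmetric] h'_def[symmetric]
          using subB[OF h(2) le bd dh(2) dpos q0 q(2) less_imp_le[OF h(2)] le] by simp
      qed
    qed
    have "E \<le> (a * (t - s) - b * (t' - s'))\<^sup>2 + 8 * (a\<^sup>2 * ((t - s)\<^sup>2 / 2^n) + b\<^sup>2 * ((t' - s')\<^sup>2 / 2^n)
              + a\<^sup>2 * ((\<bar>s - s'\<bar> + \<bar>t - t'\<bar>) * (max t t' - min s s')) + (a - b)\<^sup>2 * (t' - s')\<^sup>2)"
      unfolding E_def by (rule two_pairs(3)[OF bm i j st st'])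
    also have "a\<^sup>2 * ((t - s)\<^sup>2 / 2^n) + b\<^sup>2 * ((t' - s')\<^sup>2 / 2^n) = R / 8 / 2^n"
      by (simp add: R_def field_simps)
    finally have E1: "E \<le> (a * (t - s) - b * (t' - s'))\<^sup>2 + 8 * (R / 8 / 2^n
              + a\<^sup>2 * ((\<bar>s - s'\<bar> + \<bar>t - t'\<bar>) * (max t t' - min s s')) + (a - b)\<^sup>2 * (t' - s')\<^sup>2)" .
    have "8 * (R / 8 / 2^n) = R / 2^n" by simp
    then have "E \<le> dl powr (2 - 2*q) + R / 2^n + 8 * (2 * dl powr (2 - 2*q)) + 8 * dl powr (2 - 2*q)"
      using E1 T1 T3 T4 by (simp add: distrib_left)
    also have "\<dots> \<le> 300 * dl powr (2 - 2*q) + R / 2^n" by simp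
    finally show ?thesis .
  qed
  then show "(\<integral>\<omega>. (a * lvl2_sum strat W i j s t n \<omega> - b * lvl2_sum strat W i j s' t' n \<omega>)\<^sup>2 \<partial>M)
          \<le> 300 * dl powr (2 - 2*q) + 8 * (a\<^sup>2 * (t - s)\<^sup>2 + b\<^sup>2 * (t' - s')\<^sup>2) / 2^n"
    unfolding E_def R_def .
qed

lemma main_est:
  fixes p :: real
  assumes p: "2 < p" "p < 3" and bm: "brownian_motion M d W" and i: "i \<in> {1..d}" and j: "j \<in> {1..d}"
    and s: "s \<in> {0..1}" and t: "t \<in> {0..1}" and s': "s' \<in> {0..1}" and t': "t' \<in> {0..1}"
  shows "(\<integral>\<^sup>+ \<omega>. ennreal (\<bar>Zproc p strat W i j s t \<omega> - Zproc p strat W i j s' t' \<omega>\<bar>\<^sup>2) \<partial>M)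
      \<le> ennreal (300 * (\<bar>s' - s\<bar> + \<bar>t' - t\<bar>) powr (2 * (1 - 2 / p)))"
proof -
  define q where "q = 2 / p"
  have q: "1/2 \<le> q" "q \<le> 1" using p by (auto simp: q_def field_simps)
  have geq: "2 * (1 - 2 / p) = 2 - 2 * q" by (simp add: q_def algebra_simps)
  define dl where "dl = \<bar>s' - s\<bar> + \<bar>t' - t\<bar>"
  have dl0: "0 \<le> dl" by (simp add: dl_def)
  show ?thesis
  proof (cases "dl = 0")
    case True
    then have "s' = s" "t' = t" by (auto simp: dl_def)
    then show ?thesis by simp
  next
    case False
    then have dpos: "0 < dl" using dl0 by simp
    define S where "S = (\<lambda>n \<omega>. lvl2_sum strat W i j s t n \<omega>)"
    define S' where "S' = (\<lambda>n \<omega>. lvl2_sum strat W i j s' t' n \<omega>)"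
    define a where "a = (t - s) powr (-q)"
    define b where "b = (t' - s') powr (-q)"
    define f where "f = (\<lambda>n \<omega>. (if s < t then a * S n \<omega> else 0) - (if s' < t' then b * S' n \<omega> else 0))"
    define F where "F = (\<lambda>\<omega>. Zproc p strat W i j s t \<omega> - Zproc p strat W i j s' t' \<omega>)"
    define R where "R = 8 * (a\<^sup>2 * (t - s)\<^sup>2 + b\<^sup>2 * (t' - s')\<^sup>2)"
    have R: "0 \<le> R" by (simp add: R_def)
    have Z: "\<And>\<omega>. Zproc p strat W i j s t \<omega> = (if s < t then a * beta2 strat W i j s t \<omega> else 0)"
      using s t by (auto simp: Zproc_def a_def q_def powr_minus_divide)
    have Z': "\<And>\<omega>. Zproc p strat W i j s' t' \<omega> = (if s' < t' then b * beta2 strat W i j s' t' \<omega> else 0)"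
      using s' t' by (auto simp: Zproc_def b_def q_def powr_minus_divide)
    have mS: "s < t \<Longrightarrow> S n \<in> borel_measurable M" for n
      unfolding S_def using lvl2_meas[OF bm i j] s t by auto
    have mS': "s' < t' \<Longrightarrow> S' n \<in> borel_measurable M" for n
      unfolding S'_def using lvl2_meas[OF bm i j] s' t' by auto
    have meas: "f n \<in> borel_measurable M" for n
      unfolding f_def using mS[of n] mS'[of n]
      by (cases "s < t"; cases "s' < t'") (auto intro!: borel_measurable_diff borel_measurable_times)
    have L1: "AE \<omega> in M. (\<lambda>n. if s < t then a * S n \<omega> else 0) \<longlonglongrightarrow> (if s < t then a * beta2 strat W i j s t \<omega> else 0)"
    proof (cases "s < t")
      case True
      have "AE \<omega> in M. convergent (\<lambda>n. lvl2_sum strat W i j s t n \<omega>)"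
        using lvl2_conv[OF bm i j] True s t by auto
      then show ?thesis
      proof (rule AE_mp, intro AE_I2 impI)
        fix \<omega> assume "convergent (\<lambda>n. lvl2_sum strat W i j s t n \<omega>)"
        then have "(\<lambda>n. S n \<omega>) \<longlonglongrightarrow> beta2 strat W i j s t \<omega>"
          unfolding S_def beta2_def by (simp add: convergent_LIMSEQ_iff)
        then show "(\<lambda>n. if s < t then a * S n \<omega> else 0) \<longlonglongrightarrow> (if s < t then a * beta2 strat W i j s t \<omega> else 0)"
          using True by (simp add: tendsto_mult_left)
      qed
    qed simp
    have L2: "AE \<omega> in M. (\<lambda>n. if s' < t' then b * S' n \<omega> else 0) \<longlonglongrightarrow> (if s' < t' then b * beta2 strat W i j s' t' \<omega> else 0)"
    proof (cases "s' < t'")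
      case True
      have "AE \<omega> in M. convergent (\<lambda>n. lvl2_sum strat W i j s' t' n \<omega>)"
        using lvl2_conv[OF bm i j] True s' t' by auto
      then show ?thesis
      proof (rule AE_mp, intro AE_I2 impI)
        fix \<omega> assume "convergent (\<lambda>n. lvl2_sum strat W i j s' t' n \<omega>)"
        then have "(\<lambda>n. S' n \<omega>) \<longlonglongrightarrow> beta2 strat W i j s' t' \<omega>"
          unfolding S'_def beta2_def by (simp add: convergent_LIMSEQ_iff)
        then show "(\<lambda>n. if s' < t' then b * S' n \<omega> else 0) \<longlonglongrightarrow> (if s' < t' then b * beta2 strat W i j s' t' \<omega> else 0)"
          using True by (simp add: tendsto_mult_left)
      qed
    qed simp
    have lim: "AE \<omega> in M. (\<lambda>n. f n \<omega>) \<longlonglongrightarrow> F \<omega>"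
      using L1 L2
    proof (eventually_elim)
      case (elim \<omega>)
      then show ?case unfolding f_def F_def Z Z' by (intro tendsto_diff)
    qed
    have bnd: "integrable M (\<lambda>\<omega>. (f n \<omega>)\<^sup>2) \<and> (\<integral>\<omega>. (f n \<omega>)\<^sup>2 \<partial>M) \<le> 300 * dl powr (2 - 2*q) + R / 2^n" for n
    proof (cases "s < t"; cases "s' < t'")
      assume st: "s < t" and st': "s' < t'"
      have st3: "0 \<le> s" "s < t" "t \<le> 1" using st s t by auto
      have st3': "0 \<le> s'" "s' < t'" "t' \<le> 1" using st' s' t' by auto
      have fe: "f n = (\<lambda>\<omega>. a * lvl2_sum strat W i j s t n \<omega> - b * lvl2_sum strat W i j s' t' n \<omega>)"
        using st st' by (simp add: f_def S_def S'_def)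
      show ?thesis unfolding fe R_def a_def b_def
        using case_both[OF q bm i j st3 st3' dl_def dpos, of strat n] by simp
    next
      assume st: "s < t" and st': "\<not> s' < t'"
      have st3: "0 \<le> s" "s < t" "t \<le> 1" using st s t by auto
      have fe: "f n = (\<lambda>\<omega>. a * lvl2_sum strat W i j s t n \<omega>)"
        using st st' by (simp add: f_def S_def)
      have hd: "t - s \<le> dl" using st' unfolding dl_def by linarith
      have "(\<integral>\<omega>. (a * lvl2_sum strat W i j s t n \<omega>)\<^sup>2 \<partial>M) \<le> 3 * a\<^sup>2 * (t - s)\<^sup>2"
        by (rule single_pair(2)[OF bm i j st3])
      also have "\<dots> = 3 * (t - s) powr (2 - 2*q)" using ah_eq[of "t - s" q] st by (simp add: a_def)
      also have "\<dots> \<le> 3 * dl powr (2 - 2*q)" using hd st q by (auto intro!: powr_mono2)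
      also have "\<dots> \<le> 300 * dl powr (2 - 2*q) + R / 2^n" using R by simp
      finally show ?thesis unfolding fe using single_pair(1)[OF bm i j st3] by simp
    next
      assume st: "\<not> s < t" and st': "s' < t'"
      have st3': "0 \<le> s'" "s' < t'" "t' \<le> 1" using st' s' t' by auto
      have fe: "(\<lambda>\<omega>. (f n \<omega>)\<^sup>2) = (\<lambda>\<omega>. (b * lvl2_sum strat W i j s' t' n \<omega>)\<^sup>2)"
        using st st' by (simp add: f_def S'_def)
      have hd: "t' - s' \<le> dl" using st unfolding dl_def by linarith
      have "(\<integral>\<omega>. (b * lvl2_sum strat W i j s' t' n \<omega>)\<^sup>2 \<partial>M) \<le> 3 * b\<^sup>2 * (t' - s')\<^sup>2"
        by (rule single_pair(2)[OF bm i j st3'])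
      also have "\<dots> = 3 * (t' - s') powr (2 - 2*q)" using ah_eq[of "t' - s'" q] st' by (simp add: b_def)
      also have "\<dots> \<le> 3 * dl powr (2 - 2*q)" using hd st' q by (auto intro!: powr_mono2)
      also have "\<dots> \<le> 300 * dl powr (2 - 2*q) + R / 2^n" using R by simp
      finally show ?thesis unfolding fe using single_pair(1)[OF bm i j st3'] by simp
    next
      assume st: "\<not> s < t" and st': "\<not> s' < t'"
      have fe: "(\<lambda>\<omega>. (f n \<omega>)\<^sup>2) = (\<lambda>\<omega>. 0)" using st st' by (simp add: f_def)
      have "0 \<le> 300 * dl powr (2 - 2*q) + R / 2^n" using R by simp
      then show ?thesis unfolding fe by simp
    qed
    have "(\<integral>\<^sup>+\<omega>. ennreal ((F \<omega>)\<^sup>2) \<partial>M) \<le> ennreal (300 * dl powr (2 - 2*q))"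
      by (rule fatou_bound[OF meas lim]) (use bnd in auto)
    then show ?thesis unfolding F_def dl_def[symmetric] geq by simp
  qed
qed

theorem lemma2p2:
  fixes p :: real
  assumes "2 < p" "p < 3"
  shows "\<exists>c::real. \<forall>(strat::bool) (d::nat) (M::'a measure) W i j s t s' t'.
    brownian_motion M d W \<longrightarrow> i \<in> {1..d} \<longrightarrow> j \<in> {1..d} \<longrightarrow>
    s \<in> {0..1} \<longrightarrow> t \<in> {0..1} \<longrightarrow> s' \<in> {0..1} \<longrightarrow> t' \<in> {0..1} \<longrightarrow>
    (\<integral>\<^sup>+ \<omega>. ennreal (\<bar>Zproc p strat W i j s t \<omega> - Zproc p strat W i j s' t' \<omega>\<bar>\<^sup>2) \<partial>M)
      \<le> ennreal (c * (\<bar>s' - s\<bar> + \<bar>t' - t\<bar>) powr (2 * (1 - 2 / p)))"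
  using main_est[OF assms] by blast


end
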